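(* Let $\mathcal H$ be a graded connected Hopf algebra over a field $\Bbbk$ of characteristic different from $2$. Let $\varphi,\psi\colon\mathcal H\to\Bbbk$ be linear functionals with $\varphi_0=\psi_0=\epsilon$. Then: (a) There is a unique linear functional $\rho\colon\mathcal H\to\Bbbk$ such that $\varphi=\rho\psi\rho$ and $\rho_0=\epsilon$. (b) If $\varphi$ and $\psi$ are characters, then so is $\rho$. (c) If $\bar\varphi=\psi^{-1}$ then $\rho$ is even, and if $\bar\varphi=\psi$ then $\rho$ is odd.
   Context: $\mathcal H=\bigoplus_{n\ge0}\mathcal H_n$ is graded connected ($\mathcal H_0=\Bbbk\cdot1$, structure maps graded) with each $\mathcal H_n$ finite-dimensional. For a linear functional $\varphi$, $\varphi_n$ denotes its restriction to $\mathcal H_n$, and $\epsilon$ (the counit) is viewed as $\epsilon_0$. Products of linear functionals are convolution products $\varphi\psi=m_\Bbbk\circ(\varphi\otimes\psi)\circ\Delta$. A character is an algebra morphism $\mathcal H\to\Bbbk$; characters form a group under convolution with inverse $\varphi^{-1}=\varphi\circ S$. For a linear functional $\varphi$, $\bar\varphi(h)=(-1)^n\varphi(h)$ for $h\in\mathcal H_n$. A character $\rho$ is even if $\bar\rho=\rho$ and odd if $\bar\rho=\rho^{-1}$. *)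

theory Defs
  imports Complex_Main
begin

text \<open>
The carrier is a type 'h of class ring_1 (the algebra multiplication and unit),
with a scalar multiplication smult making it a 'k-vector space and a 'k-algebra.  Elements of the algebraic tensor
product H (x) H are represented by finite lists of pairs (a,b), standing for
the sum of the a (x) b; two such representations are equal in H (x) H iff all
pairs of linear functionals f, g give the same value of the sum of f a * g b
(this is the injectivity of H (x) H into (H* (x) H*)* over a field).
\<close>

definition lin_fun :: "('k::field \<Rightarrow> 'h::ab_group_add \<Rightarrow> 'h) \<Rightarrow> ('h \<Rightarrow> 'k) \<Rightarrow> bool" where
  "lin_fun smult f \<longleftrightarrow> Vector_Spaces.linear smult ((*) :: 'k \<Rightarrow> 'k \<Rightarrow> 'k) f"

definition pairsum :: "('h \<Rightarrow> 'k::comm_ring_1) \<Rightarrow> ('h \<Rightarrow> 'k) \<Rightarrow> ('h \<times> 'h) list \<Rightarrow> 'k" where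
  "pairsum f g xs = sum_list (map (\<lambda>(a, b). f a * g b) xs)"

text \<open>Convolution product of linear functionals: m_k o (f (x) g) o Delta\<close>
definition conv :: "('h \<Rightarrow> ('h \<times> 'h) list) \<Rightarrow> ('h \<Rightarrow> 'k::comm_ring_1) \<Rightarrow> ('h \<Rightarrow> 'k) \<Rightarrow> 'h \<Rightarrow> 'k" where
  "conv cop f g h = pairsum f g (cop h)"

definition graded_connected_hopf_algebra ::
  "('k::field \<Rightarrow> 'h::ring_1 \<Rightarrow> 'h) \<Rightarrow> (nat \<Rightarrow> 'h set) \<Rightarrow> ('h \<Rightarrow> ('h \<times> 'h) list)
    \<Rightarrow> ('h \<Rightarrow> 'k) \<Rightarrow> ('h \<Rightarrow> 'h) \<Rightarrow> bool" where
  "graded_connected_hopf_algebra smult H cop eps S \<longleftrightarrow>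
     \<comment> \<open>'k-algebra\<close>
     vector_space smult \<and>
     (\<forall>c x y. smult c (x * y) = smult c x * y \<and> smult c (x * y) = x * smult c y) \<and>
     \<comment> \<open>grading: H = direct sum of finite-dimensional subspaces H n\<close>
     (\<forall>n. module.subspace smult (H n)) \<and>
     (\<forall>n. \<exists>B. finite B \<and> H n = module.span smult B) \<and>
     (\<forall>x. \<exists>N. x \<in> module.span smult (\<Union>n\<le>N. H n)) \<and>
     (\<forall>N (x :: nat \<Rightarrow> 'h). (\<forall>n\<le>N. x n \<in> H n) \<and> (\<Sum>n\<le>N. x n) = 0 \<longrightarrow> (\<forall>n\<le>N. x n = 0)) \<and>
     \<comment> \<open>connected\<close>
     H 0 = range (\<lambda>c. smult c 1) \<and>
     \<comment> \<open>graded multiplication\<close>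
     (\<forall>m n x y. x \<in> H m \<and> y \<in> H n \<longrightarrow> x * y \<in> H (m + n)) \<and>
     \<comment> \<open>coproduct: linear\<close>
     (\<forall>f g x y. lin_fun smult f \<and> lin_fun smult g \<longrightarrow>
        pairsum f g (cop (x + y)) = pairsum f g (cop x) + pairsum f g (cop y)) \<and>
     (\<forall>f g c x. lin_fun smult f \<and> lin_fun smult g \<longrightarrow>
        pairsum f g (cop (smult c x)) = c * pairsum f g (cop x)) \<and>
     \<comment> \<open>coproduct: graded, Delta(H n) inside sum over i+j=n of H i (x) H j\<close>
     (\<forall>n x. x \<in> H n \<longrightarrow> (\<forall>(a, b) \<in> set (cop x). \<exists>i\<le>n. a \<in> H i \<and> b \<in> H (n - i))) \<and>
     \<comment> \<open>coassociativity: (f (x) g (x) k)((Delta (x) id) Delta x) = (f (x) g (x) k)((id (x) Delta) Delta x)\<close>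
     (\<forall>f g k x. lin_fun smult f \<and> lin_fun smult g \<and> lin_fun smult k \<longrightarrow>
        conv cop (conv cop f g) k x = conv cop f (conv cop g k) x) \<and>
     \<comment> \<open>counit\<close>
     lin_fun smult eps \<and>
     (\<forall>n>0. \<forall>x\<in>H n. eps x = 0) \<and>
     (\<forall>x. sum_list (map (\<lambda>(a, b). smult (eps a) b) (cop x)) = x) \<and>
     (\<forall>x. sum_list (map (\<lambda>(a, b). smult (eps b) a) (cop x)) = x) \<and>
     \<comment> \<open>bialgebra: Delta and eps are unital algebra morphisms\<close>
     (\<forall>f g. lin_fun smult f \<and> lin_fun smult g \<longrightarrow> pairsum f g (cop 1) = f 1 * g 1) \<and>
     (\<forall>f g x y. lin_fun smult f \<and> lin_fun smult g \<longrightarrow>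
        pairsum f g (cop (x * y)) =
        sum_list (map (\<lambda>(a, b). sum_list (map (\<lambda>(c, d). f (a * c) * g (b * d)) (cop y))) (cop x))) \<and>
     eps 1 = 1 \<and> (\<forall>x y. eps (x * y) = eps x * eps y) \<and>
     \<comment> \<open>antipode: linear, graded, m(S (x) id)Delta = eta eps = m(id (x) S)Delta\<close>
     Vector_Spaces.linear smult smult S \<and>
     (\<forall>n. \<forall>x\<in>H n. S x \<in> H n) \<and>
     (\<forall>x. sum_list (map (\<lambda>(a, b). S a * b) (cop x)) = smult (eps x) 1) \<and>
     (\<forall>x. sum_list (map (\<lambda>(a, b). a * S b) (cop x)) = smult (eps x) 1)"

definition character :: "('k::field \<Rightarrow> 'h::ring_1 \<Rightarrow> 'h) \<Rightarrow> ('h \<Rightarrow> 'k) \<Rightarrow> bool" where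
  "character smult f \<longleftrightarrow> lin_fun smult f \<and> f 1 = 1 \<and> (\<forall>x y. f (x * y) = f x * f y)"

definition bar :: "('k::field \<Rightarrow> 'h::ab_group_add \<Rightarrow> 'h) \<Rightarrow> (nat \<Rightarrow> 'h set) \<Rightarrow> ('h \<Rightarrow> 'k) \<Rightarrow> 'h \<Rightarrow> 'k" where
  "bar smult H f = (THE g. lin_fun smult g \<and> (\<forall>n. \<forall>h\<in>H n. g h = (-1) ^ n * f h))"

text \<open>Convolution inverse (for characters this is f o S)\<close>
definition conv_inv :: "('k::field \<Rightarrow> 'h::ab_group_add \<Rightarrow> 'h) \<Rightarrow> ('h \<Rightarrow> ('h \<times> 'h) list) \<Rightarrow> ('h \<Rightarrow> 'k)
    \<Rightarrow> ('h \<Rightarrow> 'k) \<Rightarrow> 'h \<Rightarrow> 'k" where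
  "conv_inv smult cop eps f = (THE g. lin_fun smult g \<and> conv cop g f = eps \<and> conv cop f g = eps)"

definition even_fun :: "('k::field \<Rightarrow> 'h::ab_group_add \<Rightarrow> 'h) \<Rightarrow> (nat \<Rightarrow> 'h set) \<Rightarrow> ('h \<Rightarrow> 'k) \<Rightarrow> bool" where
  "even_fun smult H f \<longleftrightarrow> bar smult H f = f"

definition odd_fun :: "('k::field \<Rightarrow> 'h::ab_group_add \<Rightarrow> 'h) \<Rightarrow> (nat \<Rightarrow> 'h set) \<Rightarrow> ('h \<Rightarrow> ('h \<times> 'h) list)
    \<Rightarrow> ('h \<Rightarrow> 'k) \<Rightarrow> ('h \<Rightarrow> 'k) \<Rightarrow> bool" where
  "odd_fun smult H cop eps f \<longleftrightarrow> bar smult H f = conv_inv smult cop eps f"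

end

theory Submission
  imports Defs "HOL-Library.Function_Algebras"
begin

definition sc :: "'k::field \<Rightarrow> ('a \<Rightarrow> 'k) \<Rightarrow> 'a \<Rightarrow> 'k" where
  "sc c f = (\<lambda>x. c * f x)"

locale cva =
  fixes V :: "('a \<Rightarrow> 'k::field) set" and cv :: "('a \<Rightarrow> 'k) \<Rightarrow> ('a \<Rightarrow> 'k) \<Rightarrow> 'a \<Rightarrow> 'k"
    and e :: "'a \<Rightarrow> 'k" and I :: "nat \<Rightarrow> ('a \<Rightarrow> 'k) set"
  assumes V_add: "f \<in> V \<Longrightarrow> g \<in> V \<Longrightarrow> f + g \<in> V"
  and V_sc: "f \<in> V \<Longrightarrow> sc c f \<in> V"
  and e_V: "e \<in> V"
  and cv_V: "f \<in> V \<Longrightarrow> g \<in> V \<Longrightarrow> cv f g \<in> V"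
  and cv_addl: "cv (f + g) h = cv f h + cv g h"
  and cv_addr: "cv f (g + h) = cv f g + cv f h"
  and cv_scl: "cv (sc c f) g = sc c (cv f g)"
  and cv_scr: "cv f (sc c g) = sc c (cv f g)"
  and unit_l: "f \<in> V \<Longrightarrow> cv e f = f"
  and unit_r: "f \<in> V \<Longrightarrow> cv f e = f"
  and I_V: "I n \<subseteq> V"
  and I_zero: "0 \<in> I n"
  and I_add: "f \<in> I n \<Longrightarrow> g \<in> I n \<Longrightarrow> f + g \<in> I n"
  and I_sc: "f \<in> I n \<Longrightarrow> sc c f \<in> I n"
  and I_0: "I 0 = V"
  and I_Suc: "I (Suc n) \<subseteq> I n"
  and I_mult: "f \<in> I a \<Longrightarrow> g \<in> I b \<Longrightarrow> cv f g \<in> I (a + b)"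
  and I_sep: "(\<And>n. f \<in> I n) \<Longrightarrow> f = 0"
begin

lemma lam_diff: "(\<lambda>a. f a - g a) = f - g"
  unfolding fun_diff_def ..

lemma sc_m1: "sc (-1) f = - f"
  by (auto simp: sc_def)

lemma V_neg: "f \<in> V \<Longrightarrow> - f \<in> V"
  using V_sc[of f "-1"] unfolding sc_m1 .

lemma V_diff: "f \<in> V \<Longrightarrow> g \<in> V \<Longrightarrow> f - g \<in> V"
  using V_add[OF _ V_neg[of g], of f] unfolding diff_conv_add_uminus[symmetric] .

lemma I_neg: "f \<in> I n \<Longrightarrow> - f \<in> I n"
  using I_sc[of f n "-1"] unfolding sc_m1 .

lemma I_diff: "f \<in> I n \<Longrightarrow> g \<in> I n \<Longrightarrow> f - g \<in> I n"
  using I_add[OF _ I_neg[of g], of f] unfolding diff_conv_add_uminus[symmetric] .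

lemma I_mono0: "I (m + k) \<subseteq> I m"
proof (induction k)
  case 0
  then show ?case by simp
next
  case (Suc k)
  then show ?case using I_Suc[of "m + k"] by simp
qed

lemma I_mono: "m \<le> n \<Longrightarrow> I n \<subseteq> I m"
  using I_mono0[of m "n - m"] by simp

lemma I_monoD: "f \<in> I n \<Longrightarrow> m \<le> n \<Longrightarrow> f \<in> I m"
  using I_mono[of m n] by blast

lemma I_VD: "f \<in> I n \<Longrightarrow> f \<in> V"
  using I_V by blast

lemma cv_diffl: "cv (f - g) h = cv f h - cv g h"
proof -
  have "cv f h = cv (f - g) h + cv g h" using cv_addl[of "f - g" g h] by simp
  then show ?thesis by (simp add: algebra_simps)
qed

lemma cv_diffr: "cv h (f - g) = cv h f - cv h g"
proof -
  have "cv h f = cv h (f - g) + cv h g" using cv_addr[of h "f - g" g] by simp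
  then show ?thesis by (simp add: algebra_simps)
qed

lemma I_mult': "f \<in> I a \<Longrightarrow> g \<in> I b \<Longrightarrow> n \<le> a + b \<Longrightarrow> cv f g \<in> I n"
  by (rule I_monoD[OF I_mult])

lemma key:
  assumes rV: "\<rho> \<in> V" and pV: "\<psi> \<in> V" and r1: "\<rho> - e \<in> I 1" and p1: "\<psi> - e \<in> I 1"
    and h: "h \<in> I m" and m: "1 \<le> m"
  shows "cv (cv (\<rho> + h) \<psi>) (\<rho> + h) - cv (cv \<rho> \<psi>) \<rho> - (h + h) \<in> I (Suc m)"
proof -
  define u where "u = \<rho> - e"
  define w where "w = \<psi> - e"
  have re: "\<rho> = e + u" and pe: "\<psi> = e + w" unfolding u_def w_def by simp_all
  have u: "u \<in> I 1" and w: "w \<in> I 1" using r1 p1 unfolding u_def w_def by auto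
  have uV: "u \<in> V" and wV: "w \<in> V" and hV: "h \<in> V" using u w h I_VD by auto
  have eq: "cv (cv (\<rho> + h) \<psi>) (\<rho> + h) - cv (cv \<rho> \<psi>) \<rho> - (h + h)
     = cv w h + cv (cv u \<psi>) h + cv h w + cv (cv h \<psi>) u + cv (cv h \<psi>) h"
    unfolding re pe
    apply (simp only: cv_addl cv_addr)
    apply (simp add: unit_l unit_r uV wV hV e_V cv_V V_add)
    done
  have pI: "\<psi> \<in> I 0" using pV I_0 by simp
  have m2: "Suc m \<le> m + m" using m by simp
  show ?thesis unfolding eq
    by (intro I_add I_mult'[OF w h] I_mult'[OF I_mult[OF u pI] h] I_mult'[OF h w]
      I_mult'[OF I_mult[OF h pI] u] I_mult'[OF I_mult[OF h pI] h]) (use m in simp_all)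
qed

lemma uniq:
  assumes two: "(2::'k) \<noteq> 0"
    and rV: "\<rho> \<in> V" and r'V: "\<rho>' \<in> V" and pV: "\<psi> \<in> V"
    and r1: "\<rho> - e \<in> I 1" and r'1: "\<rho>' - e \<in> I 1" and p1: "\<psi> - e \<in> I 1"
    and eq: "cv (cv \<rho> \<psi>) \<rho> = cv (cv \<rho>' \<psi>) \<rho>'"
  shows "\<rho> = \<rho>'"
proof -
  define d where "d = \<rho>' - \<rho>"
  have r': "\<rho>' = \<rho> + d" unfolding d_def by simp
  have "d \<in> I (Suc n)" for n
  proof (induction n)
    case 0
    have "(\<rho>' - e) - (\<rho> - e) \<in> I 1" using r1 r'1 I_diff by blast
    moreover have "(\<rho>' - e) - (\<rho> - e) = d" unfolding d_def by (simp add: fun_eq_iff)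
    ultimately show ?case by simp
  next
    case (Suc n)
    have "cv (cv (\<rho> + d) \<psi>) (\<rho> + d) - cv (cv \<rho> \<psi>) \<rho> - (d + d) \<in> I (Suc (Suc n))"
      by (rule key[OF rV pV r1 p1 Suc]) simp
    then have "- (d + d) \<in> I (Suc (Suc n))" using eq r' by simp
    then have "sc (- 1 / 2) (- (d + d)) \<in> I (Suc (Suc n))" by (rule I_sc)
    moreover have "sc (- 1 / 2) (- (d + d)) = d"
      using two by (auto simp: sc_def fun_eq_iff field_simps)
    ultimately show ?case by simp
  qed
  then have "d \<in> I n" for n using I_Suc[of n] by (cases n) auto
  then have "d = 0" by (rule I_sep)
  then show ?thesis using r' by simp
qed

end

locale cva_c = cva V cv e I for V :: "('a \<Rightarrow> 'k::field) set" and cv e I +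
  assumes complete: "(\<And>k. F k \<in> V) \<Longrightarrow> (\<And>k. F (Suc k) - F k \<in> I k)
     \<Longrightarrow> \<exists>r\<in>V. \<forall>k. r - F k \<in> I k"
begin

lemma exist:
  assumes two: "(2::'k) \<noteq> 0"
    and fV: "\<phi> \<in> V" and pV: "\<psi> \<in> V"
    and f1: "\<phi> - e \<in> I 1" and p1: "\<psi> - e \<in> I 1"
  shows "\<exists>\<rho>\<in>V. \<rho> - e \<in> I 1 \<and> cv (cv \<rho> \<psi>) \<rho> = \<phi>"
proof -
  define err where "err = (\<lambda>r. \<phi> - cv (cv r \<psi>) r)"
  define F where "F = rec_nat e (\<lambda>k r. r + sc (1/2) (err r))"
  have F0: "F 0 = e" and FS: "F (Suc k) = F k + sc (1/2) (err (F k))" for k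
    unfolding F_def by simp_all
  have inv: "F k \<in> V \<and> F k - e \<in> I 1 \<and> err (F k) \<in> I (Suc k)" for k
  proof (induction k)
    case 0
    have "(\<phi> - e) - (\<psi> - e) \<in> I 1" using f1 p1 by (rule I_diff)
    moreover have "(\<phi> - e) - (\<psi> - e) = err (F 0)" unfolding F0 err_def
      using e_V pV by (simp add: unit_l unit_r fun_eq_iff)
    ultimately have a: "err (F 0) \<in> I (Suc 0)" by simp
    have b: "F 0 - e \<in> I 1" unfolding F0 diff_self by (rule I_zero)
    have c: "F 0 \<in> V" unfolding F0 by (rule e_V)
    show ?case using a b c by blast
  next
    case (Suc k)
    define r where "r = F k"
    define h where "h = sc (1/2) (err r)"
    have rV: "r \<in> V" and r1: "r - e \<in> I 1" and er: "err r \<in> I (Suc k)"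
      using Suc.IH unfolding r_def by blast+
    have h: "h \<in> I (Suc k)" unfolding h_def using er by (rule I_sc)
    have hh: "h + h = err r" unfolding h_def using two
      by (simp add: sc_def fun_eq_iff field_simps)
    have FSk: "F (Suc k) = r + h" unfolding FS r_def h_def ..
    have K: "cv (cv (r + h) \<psi>) (r + h) - cv (cv r \<psi>) r - (h + h) \<in> I (Suc (Suc k))"
      by (rule key[OF rV pV r1 p1 h]) simp
    have "err (r + h) = - (cv (cv (r + h) \<psi>) (r + h) - cv (cv r \<psi>) r - (h + h))"
      unfolding hh unfolding err_def by (simp add: fun_eq_iff)
    then have e2: "err (F (Suc k)) \<in> I (Suc (Suc k))" unfolding FSk using I_neg[OF K] by simp
    have hV: "h \<in> V" using h by (rule I_VD)
    have c: "F (Suc k) \<in> V" unfolding FSk using rV hV by (rule V_add)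
    have "(r - e) + h \<in> I 1" using r1 I_monoD[OF h] by (rule I_add) simp
    moreover have "(r - e) + h = F (Suc k) - e" unfolding FSk by (simp add: fun_eq_iff)
    ultimately have b: "F (Suc k) - e \<in> I 1" by simp
    show ?case using e2 b c by blast
  qed
  have FV: "F k \<in> V" for k using inv by blast
  have Fd: "F (Suc k) - F k \<in> I k" for k
  proof -
    have "sc (1/2) (err (F k)) \<in> I (Suc k)" using inv[of k] I_sc by blast
    then have "sc (1/2) (err (F k)) \<in> I k" using I_Suc by blast
    moreover have "F (Suc k) - F k = sc (1/2) (err (F k))" unfolding FS by (simp add: fun_eq_iff)
    ultimately show ?thesis by simp
  qed
  obtain \<rho> where rV: "\<rho> \<in> V" and lim: "\<And>k. \<rho> - F k \<in> I k"
    using complete[OF FV Fd] by blast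
  have r1: "\<rho> - e \<in> I 1"
  proof -
    have "(\<rho> - F 1) + (F 1 - e) \<in> I 1" using lim[of 1] inv[of 1] I_add by blast
    moreover have "(\<rho> - F 1) + (F 1 - e) = \<rho> - e" by (simp add: fun_eq_iff)
    ultimately show ?thesis by simp
  qed
  have "cv (cv \<rho> \<psi>) \<rho> - \<phi> \<in> I n" for n
  proof (cases n)
    case 0
    have "cv (cv \<rho> \<psi>) \<rho> - \<phi> \<in> V" using cv_V[OF cv_V[OF rV pV] rV] fV by (rule V_diff)
    then show ?thesis using 0 I_0 by simp
  next
    case (Suc k)
    define h where "h = \<rho> - F n"
    have h: "h \<in> I n" unfolding h_def by (rule lim)
    have rh: "\<rho> = F n + h" unfolding h_def by (simp add: fun_eq_iff)
    have Fn1: "F n - e \<in> I 1" using inv by blast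
    have K: "cv (cv (F n + h) \<psi>) (F n + h) - cv (cv (F n) \<psi>) (F n) - (h + h) \<in> I (Suc n)"
      by (rule key[OF FV pV Fn1 p1 h]) (simp add: Suc)
    have E: "err (F n) \<in> I (Suc n)" using inv by blast
    have "cv (cv \<rho> \<psi>) \<rho> - \<phi> = (cv (cv (F n + h) \<psi>) (F n + h) - cv (cv (F n) \<psi>) (F n) - (h + h))
       - err (F n) + (h + h)"
      unfolding rh err_def by (simp add: fun_eq_iff)
    also have "\<dots> \<in> I n"
      by (intro I_add I_diff I_monoD[OF K] I_monoD[OF E] h) simp_all
    finally show ?thesis .
  qed
  then have "cv (cv \<rho> \<psi>) \<rho> - \<phi> = 0" by (rule I_sep)
  then have "cv (cv \<rho> \<psi>) \<rho> = \<phi>" by (simp add: fun_eq_iff)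
  then show ?thesis using rV r1 by blast
qed

lemma left_inv:
  assumes xV: "x \<in> V" and x1: "x - e \<in> I 1"
  shows "\<exists>g\<in>V. g - e \<in> I 1 \<and> cv g x = e"
proof -
  define G where "G = rec_nat e (\<lambda>k g. g + (e - cv g x))"
  have G0: "G 0 = e" and GS: "G (Suc k) = G k + (e - cv (G k) x)" for k
    unfolding G_def by simp_all
  have xI: "x - e \<in> I (0 + 1)" using x1 by simp
  have inv: "G k \<in> V \<and> G k - e \<in> I 1 \<and> e - cv (G k) x \<in> I (Suc k)" for k
  proof (induction k)
    case 0
    have "e - cv (G 0) x = - (x - e)" unfolding G0 using xV by (simp add: unit_l fun_eq_iff)
    then have a: "e - cv (G 0) x \<in> I (Suc 0)" using I_neg[OF x1] by simp
    have b: "G 0 - e \<in> I 1" unfolding G0 diff_self by (rule I_zero)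
    have c: "G 0 \<in> V" unfolding G0 by (rule e_V)
    show ?case using a b c by blast
  next
    case (Suc k)
    define g where "g = G k"
    define rk where "rk = e - cv g x"
    have gV: "g \<in> V" and g1: "g - e \<in> I 1" and rk: "rk \<in> I (Suc k)"
      using Suc.IH unfolding g_def rk_def by blast+
    have rkV: "rk \<in> V" using rk by (rule I_VD)
    have rkp: "rk t = e t - cv g x t" for t unfolding rk_def by simp
    have c1: "cv rk (x - e) = cv rk x - rk" by (simp add: cv_diffr unit_r rkV)
    have GSk: "G (Suc k) = g + rk" unfolding GS g_def rk_def ..
    have "e - cv (G (Suc k)) x = - cv rk (x - e)"
      unfolding GSk cv_addl c1 by (simp add: fun_eq_iff rkp)
    moreover have "cv rk (x - e) \<in> I (Suc (Suc k))" using I_mult[OF rk x1] by simp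
    ultimately have a: "e - cv (G (Suc k)) x \<in> I (Suc (Suc k))" using I_neg by simp
    have c: "G (Suc k) \<in> V" unfolding GSk using gV rkV by (rule V_add)
    have "(g - e) + rk \<in> I 1" using g1 I_monoD[OF rk] by (rule I_add) simp
    moreover have "(g - e) + rk = G (Suc k) - e" unfolding GSk by (simp add: fun_eq_iff)
    ultimately have b: "G (Suc k) - e \<in> I 1" by simp
    show ?case using a b c by blast
  qed
  have GV: "G k \<in> V" for k using inv by blast
  have Gd: "G (Suc k) - G k \<in> I k" for k
  proof -
    have "e - cv (G k) x \<in> I k" using inv[of k] I_Suc by blast
    moreover have "G (Suc k) - G k = e - cv (G k) x" unfolding GS by (simp add: fun_eq_iff)
    ultimately show ?thesis by simp
  qed
  obtain g where gV: "g \<in> V" and lim: "\<And>k. g - G k \<in> I k"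
    using complete[OF GV Gd] by blast
  have g1: "g - e \<in> I 1"
  proof -
    have "(g - G 1) + (G 1 - e) \<in> I 1" using lim[of 1] inv[of 1] I_add by blast
    moreover have "(g - G 1) + (G 1 - e) = g - e" by (simp add: fun_eq_iff)
    ultimately show ?thesis by simp
  qed
  have "e - cv g x \<in> I n" for n
  proof -
    define d where "d = g - G n"
    have d: "d \<in> I n" unfolding d_def by (rule lim)
    have gd: "g = G n + d" unfolding d_def by (simp add: fun_eq_iff)
    have "e - cv g x = (e - cv (G n) x) - cv d x" unfolding gd cv_addl by (simp add: fun_eq_iff)
    also have "\<dots> \<in> I n"
    proof (rule I_diff)
      show "e - cv (G n) x \<in> I n" using inv[of n] I_Suc by blast
      show "cv d x \<in> I n" using I_mult[OF d, of x 0] xV I_0 by simp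
    qed
    finally show ?thesis .
  qed
  then have "e - cv g x = 0" by (rule I_sep)
  then have "cv g x = e" by (simp add: fun_eq_iff)
  then show ?thesis using gV g1 by blast
qed

lemma flip: "cva_c V (\<lambda>f g. cv g f) e I"
proof unfold_locales
  show "f \<in> V \<Longrightarrow> g \<in> V \<Longrightarrow> f + g \<in> V" for f g by (rule V_add)
  show "f \<in> V \<Longrightarrow> sc c f \<in> V" for f c by (rule V_sc)
  show "e \<in> V" by (rule e_V)
  show "f \<in> V \<Longrightarrow> g \<in> V \<Longrightarrow> cv g f \<in> V" for f g by (rule cv_V)
  show "cv h (f + g) = cv h f + cv h g" for f g h by (rule cv_addr)
  show "cv (g + h) f = cv g f + cv h f" for f g h by (rule cv_addl)
  show "cv g (sc c f) = sc c (cv g f)" for c f g by (rule cv_scr)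
  show "cv (sc c g) f = sc c (cv g f)" for c f g by (rule cv_scl)
  show "f \<in> V \<Longrightarrow> cv f e = f" for f by (rule unit_r)
  show "f \<in> V \<Longrightarrow> cv e f = f" for f by (rule unit_l)
  show "I n \<subseteq> V" for n by (rule I_V)
  show "0 \<in> I n" for n by (rule I_zero)
  show "f \<in> I n \<Longrightarrow> g \<in> I n \<Longrightarrow> f + g \<in> I n" for f g n by (rule I_add)
  show "f \<in> I n \<Longrightarrow> sc c f \<in> I n" for f n c by (rule I_sc)
  show "I 0 = V" by (rule I_0)
  show "I (Suc n) \<subseteq> I n" for n by (rule I_Suc)
  show "f \<in> I a \<Longrightarrow> g \<in> I b \<Longrightarrow> cv g f \<in> I (a + b)" for f g a b
    using I_mult[of g b f a] by (simp add: add.commute)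
  show "(\<And>n. f \<in> I n) \<Longrightarrow> f = 0" for f by (rule I_sep)
  show "(\<And>k. F k \<in> V) \<Longrightarrow> (\<And>k. F (Suc k) - F k \<in> I k) \<Longrightarrow> \<exists>r\<in>V. \<forall>k. r - F k \<in> I k" for F
    by (rule complete)
qed

end

locale cva_a = cva_c V cv e I for V :: "('a \<Rightarrow> 'k::field) set" and cv e I +
  assumes assoc: "f \<in> V \<Longrightarrow> g \<in> V \<Longrightarrow> h \<in> V \<Longrightarrow> cv (cv f g) h = cv f (cv g h)"
begin

lemma right_inv:
  assumes xV: "x \<in> V" and x1: "x - e \<in> I 1"
  shows "\<exists>g\<in>V. g - e \<in> I 1 \<and> cv x g = e"
  using cva_c.left_inv[OF flip xV x1] by simp

lemma inv_uniq:
  assumes "x \<in> V" "y \<in> V" "y' \<in> V" "cv y x = e" "cv x y' = e"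
  shows "y = y'"
proof -
  have "y = cv y (cv x y')" using assms by (simp add: unit_r)
  also have "\<dots> = cv (cv y x) y'" using assoc[OF assms(2,1,3)] by (rule sym)
  also have "\<dots> = y'" using assms by (simp add: unit_l)
  finally show ?thesis .
qed

lemma inv_ex:
  assumes xV: "x \<in> V" and x1: "x - e \<in> I 1"
  shows "\<exists>y\<in>V. y - e \<in> I 1 \<and> cv y x = e \<and> cv x y = e"
proof -
  obtain g where g: "g \<in> V" "g - e \<in> I 1" "cv g x = e" using left_inv[OF xV x1] by blast
  obtain g' where g': "g' \<in> V" "cv x g' = e" using right_inv[OF xV x1] by blast
  have "g = g'" by (rule inv_uniq[OF xV g(1) g'(1) g(3) g'(2)])
  then show ?thesis using g g' by blast
qed

lemma G1_mult:
  assumes xV: "x \<in> V" and x1: "x - e \<in> I 1" and yV: "y \<in> V" and y1: "y - e \<in> I 1"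
  shows "cv x y \<in> V \<and> cv x y - e \<in> I 1"
proof -
  have xeV: "x - e \<in> V" and yeV: "y - e \<in> V" using x1 y1 by (auto intro: I_VD)
  have eq: "cv x y - e = cv (x - e) (y - e) + (x - e) + (y - e)"
    by (simp add: cv_diffl cv_diffr unit_l unit_r xV yV e_V fun_eq_iff)
  have "cv (x - e) (y - e) + (x - e) + (y - e) \<in> I 1"
    by (intro I_add I_mult'[OF x1 y1] x1 y1) simp
  then have "cv x y - e \<in> I 1" unfolding eq .
  then show ?thesis using cv_V[OF xV yV] by blast
qed

lemma even_abs:
  assumes two: "(2::'k) \<noteq> 0"
    and bV: "\<And>f. f \<in> V \<Longrightarrow> b f \<in> V"
    and bb: "\<And>f. f \<in> V \<Longrightarrow> b (b f) = f"
    and bm: "\<And>f g. f \<in> V \<Longrightarrow> g \<in> V \<Longrightarrow> b (cv f g) = cv (b f) (b g)"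
    and be: "b e = e"
    and b1: "\<And>f. f \<in> V \<Longrightarrow> f - e \<in> I 1 \<Longrightarrow> b f - e \<in> I 1"
    and rV: "\<rho> \<in> V" and pV: "\<psi> \<in> V" and fV: "\<phi> \<in> V"
    and r1: "\<rho> - e \<in> I 1" and p1: "\<psi> - e \<in> I 1"
    and eq: "cv (cv \<rho> \<psi>) \<rho> = \<phi>"
    and qV: "q \<in> V" and ql: "cv q \<psi> = e" and qr: "cv \<psi> q = e"
    and bf: "b \<phi> = q"
  shows "b \<rho> = \<rho>"
proof -
  define \<sigma> where "\<sigma> = b \<rho>"
  define \<beta> where "\<beta> = b \<psi>"
  have sV: "\<sigma> \<in> V" and s1: "\<sigma> - e \<in> I 1" unfolding \<sigma>_def using bV b1 rV r1 by auto
  have BV: "\<beta> \<in> V" unfolding \<beta>_def using bV pV by auto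
  have S1: "cv (cv \<sigma> \<beta>) \<sigma> = q"
    unfolding \<sigma>_def \<beta>_def using bf eq bm rV pV cv_V by metis
  have bq: "b q = \<phi>" using bf bb fV by metis
  have S2: "cv \<beta> \<phi> = e"
  proof -
    have "b (cv \<psi> q) = e" using qr be by simp
    then show ?thesis unfolding \<beta>_def using bm[OF pV qV] bq by simp
  qed
  define X where "X = cv \<sigma> \<beta>"
  define Y where "Y = cv \<sigma> \<psi>"
  have XV: "X \<in> V" unfolding X_def using sV BV by (rule cv_V)
  have Y: "Y \<in> V \<and> Y - e \<in> I 1" unfolding Y_def by (rule G1_mult[OF sV s1 pV p1])
  have XY: "cv X Y = e"
  proof -
    have "cv X Y = cv (cv X \<sigma>) \<psi>" unfolding Y_def using XV sV pV by (simp add: assoc)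
    also have "\<dots> = e" unfolding X_def S1 by (rule ql)
    finally show ?thesis .
  qed
  obtain Z where Z: "Z \<in> V" "cv Z Y = e" "cv Y Z = e" using inv_ex[of Y] Y by blast
  have "X = Z" using inv_uniq[of Y X Z] Y XV Z XY by blast
  then have YX: "cv Y X = e" using Z by simp
  define W where "W = cv Y \<sigma>"
  have WV: "W \<in> V" unfolding W_def using Y sV cv_V by blast
  have Wb: "cv W \<beta> = e" unfolding W_def using Y sV BV YX unfolding X_def by (simp add: assoc)
  have "W = \<phi>" by (rule inv_uniq[OF BV WV fV Wb S2])
  then have "cv (cv \<sigma> \<psi>) \<sigma> = cv (cv \<rho> \<psi>) \<rho>" unfolding W_def Y_def eq .
  then have "\<sigma> = \<rho>" by (rule uniq[OF two sV rV pV s1 r1 p1])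
  then show ?thesis unfolding \<sigma>_def .
qed

lemma odd_abs:
  assumes two: "(2::'k) \<noteq> 0"
    and bV: "\<And>f. f \<in> V \<Longrightarrow> b f \<in> V"
    and bb: "\<And>f. f \<in> V \<Longrightarrow> b (b f) = f"
    and bm: "\<And>f g. f \<in> V \<Longrightarrow> g \<in> V \<Longrightarrow> b (cv f g) = cv (b f) (b g)"
    and b1: "\<And>f. f \<in> V \<Longrightarrow> f - e \<in> I 1 \<Longrightarrow> b f - e \<in> I 1"
    and rV: "\<rho> \<in> V" and pV: "\<psi> \<in> V" and fV: "\<phi> \<in> V"
    and r1: "\<rho> - e \<in> I 1" and p1: "\<psi> - e \<in> I 1" and f1: "\<phi> - e \<in> I 1"
    and eq: "cv (cv \<rho> \<psi>) \<rho> = \<phi>"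
    and bf: "b \<phi> = \<psi>"
    and tV: "\<tau> \<in> V" and t1: "\<tau> - e \<in> I 1" and tl: "cv \<tau> \<rho> = e" and tr: "cv \<rho> \<tau> = e"
  shows "b \<rho> = \<tau>"
proof -
  define \<sigma> where "\<sigma> = b \<rho>"
  have sV: "\<sigma> \<in> V" and s1: "\<sigma> - e \<in> I 1" unfolding \<sigma>_def using bV b1 rV r1 by auto
  have bp: "b \<psi> = \<phi>" using bf bb fV by metis
  have S1: "cv (cv \<sigma> \<phi>) \<sigma> = \<psi>"
    unfolding \<sigma>_def using bf eq bm rV pV cv_V bp by metis
  have "cv \<tau> \<phi> = cv \<psi> \<rho>"
  proof -
    have "cv \<tau> \<phi> = cv \<tau> (cv (cv \<rho> \<psi>) \<rho>)" using eq by simp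
    also have "\<dots> = cv (cv (cv \<tau> \<rho>) \<psi>) \<rho>" using tV rV pV cv_V by (simp add: assoc)
    also have "\<dots> = cv \<psi> \<rho>" using tl pV by (simp add: unit_l)
    finally show ?thesis .
  qed
  then have "cv (cv \<tau> \<phi>) \<tau> = cv \<psi> (cv \<rho> \<tau>)" using pV rV tV by (simp add: assoc)
  also have "\<dots> = \<psi>" using tr pV by (simp add: unit_r)
  finally have "cv (cv \<sigma> \<phi>) \<sigma> = cv (cv \<tau> \<phi>) \<tau>" using S1 by simp
  then have "\<sigma> = \<tau>" by (rule uniq[OF two sV tV fV s1 t1 f1])
  then show ?thesis unfolding \<sigma>_def .
qed

end


lemma vs_k: "vector_space ((*) :: 'k::field \<Rightarrow> 'k \<Rightarrow> 'k)"
  by unfold_locales (simp_all add: algebra_simps)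

lemma pairsum_alt: "pairsum f g xs = sum_list (map (\<lambda>u. f (fst u) * g (snd u)) xs)"
  unfolding pairsum_def by (simp add: case_prod_unfold)

lemma pairsum_addl: "pairsum (f + f') g xs = pairsum f g xs + pairsum f' g xs"
  unfolding pairsum_alt by (induction xs) (simp_all add: algebra_simps)

lemma pairsum_addr: "pairsum f (g + g') xs = pairsum f g xs + pairsum f g' xs"
  unfolding pairsum_alt by (induction xs) (simp_all add: algebra_simps)

lemma pairsum_scl: "pairsum (sc c f) g xs = c * pairsum f g xs"
  unfolding pairsum_alt sc_def by (induction xs) (simp_all add: algebra_simps)

lemma pairsum_scr: "pairsum f (sc c g) xs = c * pairsum f g xs"
  unfolding pairsum_alt sc_def by (induction xs) (simp_all add: algebra_simps)

lemma conv_addl: "conv cop (f + f') g = conv cop f g + conv cop f' g"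
  unfolding fun_eq_iff conv_def by (simp add: pairsum_addl)

lemma conv_addr: "conv cop f (g + g') = conv cop f g + conv cop f g'"
  unfolding fun_eq_iff conv_def by (simp add: pairsum_addr)

lemma conv_scl: "conv cop (sc c f) g = sc c (conv cop f g)"
  unfolding conv_def pairsum_scl by (simp add: sc_def)

lemma conv_scr: "conv cop f (sc c g) = sc c (conv cop f g)"
  unfolding conv_def pairsum_scr by (simp add: sc_def)

lemma sum_list_zero: "(\<And>u. u \<in> set xs \<Longrightarrow> F u = (0::'a::comm_monoid_add)) \<Longrightarrow> sum_list (map F xs) = 0"
  by (induction xs) auto

lemma sum_list_swap:
  "sum_list (map (\<lambda>u. sum_list (map (\<lambda>v. F u v) ys)) xs)
   = sum_list (map (\<lambda>v. sum_list (map (\<lambda>u. F u v) xs)) ys)" for F :: "_ \<Rightarrow> _ \<Rightarrow> 'a::comm_monoid_add"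
proof (induction xs)
  case Nil
  then show ?case by (simp add: sum_list_zero)
next
  case (Cons a xs)
  then show ?case by (simp add: sum_list_addf)
qed

locale ghopf =
  fixes smult :: "'k::field \<Rightarrow> 'h::ring_1 \<Rightarrow> 'h" and H :: "nat \<Rightarrow> 'h set"
    and cop :: "'h \<Rightarrow> ('h \<times> 'h) list" and eps :: "'h \<Rightarrow> 'k" and S :: "'h \<Rightarrow> 'h"
  assumes hopf: "graded_connected_hopf_algebra smult H cop eps S"
begin

lemma vs: "vector_space smult"
  using hopf unfolding graded_connected_hopf_algebra_def by (elim conjE) assumption
lemma F_alg: "\<forall>c x y. smult c (x * y) = smult c x * y \<and> smult c (x * y) = x * smult c y"
  using hopf unfolding graded_connected_hopf_algebra_def by (elim conjE) assumption
lemma F_sub: "\<forall>n. module.subspace smult (H n)"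
  using hopf unfolding graded_connected_hopf_algebra_def by (elim conjE) assumption
lemma F_span: "\<forall>x. \<exists>N. x \<in> module.span smult (\<Union>n\<le>N. H n)"
  using hopf unfolding graded_connected_hopf_algebra_def by (elim conjE) assumption
lemma F_indep: "\<forall>N (x :: nat \<Rightarrow> 'h). (\<forall>n\<le>N. x n \<in> H n) \<and> (\<Sum>n\<le>N. x n) = 0 \<longrightarrow> (\<forall>n\<le>N. x n = 0)"
  using hopf unfolding graded_connected_hopf_algebra_def by (elim conjE) assumption
lemma F_H0: "H 0 = range (\<lambda>c. smult c 1)"
  using hopf unfolding graded_connected_hopf_algebra_def by (elim conjE) assumption
lemma F_Hmult: "\<forall>m n x y. x \<in> H m \<and> y \<in> H n \<longrightarrow> x * y \<in> H (m + n)"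
  using hopf unfolding graded_connected_hopf_algebra_def by (elim conjE) assumption
lemma F_copadd: "\<forall>f g x y. lin_fun smult f \<and> lin_fun smult g \<longrightarrow>
        pairsum f g (cop (x + y)) = pairsum f g (cop x) + pairsum f g (cop y)"
  using hopf unfolding graded_connected_hopf_algebra_def by (elim conjE) assumption
lemma F_copsc: "\<forall>f g c x. lin_fun smult f \<and> lin_fun smult g \<longrightarrow>
        pairsum f g (cop (smult c x)) = c * pairsum f g (cop x)"
  using hopf unfolding graded_connected_hopf_algebra_def by (elim conjE) assumption
lemma F_grad: "\<forall>n x. x \<in> H n \<longrightarrow> (\<forall>(a, b) \<in> set (cop x). \<exists>i\<le>n. a \<in> H i \<and> b \<in> H (n - i))"
  using hopf unfolding graded_connected_hopf_algebra_def by (elim conjE) assumption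
lemma F_coassoc: "\<forall>f g k x. lin_fun smult f \<and> lin_fun smult g \<and> lin_fun smult k \<longrightarrow>
        conv cop (conv cop f g) k x = conv cop f (conv cop g k) x"
  using hopf unfolding graded_connected_hopf_algebra_def by (elim conjE) assumption
lemma eps_lin: "lin_fun smult eps"
  using hopf unfolding graded_connected_hopf_algebra_def by (elim conjE) assumption
lemma F_epsH: "\<forall>n>0. \<forall>x\<in>H n. eps x = 0"
  using hopf unfolding graded_connected_hopf_algebra_def by (elim conjE) assumption
lemma F_cl: "\<forall>x. sum_list (map (\<lambda>(a, b). smult (eps a) b) (cop x)) = x"
  using hopf unfolding graded_connected_hopf_algebra_def by (elim conjE) assumption
lemma F_cr: "\<forall>x. sum_list (map (\<lambda>(a, b). smult (eps b) a) (cop x)) = x"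
  using hopf unfolding graded_connected_hopf_algebra_def by (elim conjE) assumption
lemma F_bialg: "\<forall>f g x y. lin_fun smult f \<and> lin_fun smult g \<longrightarrow>
        pairsum f g (cop (x * y)) =
        sum_list (map (\<lambda>(a, b). sum_list (map (\<lambda>(c, d). f (a * c) * g (b * d)) (cop y))) (cop x))"
  using hopf unfolding graded_connected_hopf_algebra_def by (elim conjE) assumption
lemma eps1: "eps 1 = 1"
  using hopf unfolding graded_connected_hopf_algebra_def by (elim conjE) assumption
lemma F_epsmult: "\<forall>x y. eps (x * y) = eps x * eps y"
  using hopf unfolding graded_connected_hopf_algebra_def by (elim conjE) assumption

sublocale vs: vector_space smult by (rule vs)

abbreviation lin where "lin f \<equiv> lin_fun smult f"

lemma lin_add: "lin f \<Longrightarrow> f (x + y) = f x + f y"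
  unfolding lin_fun_def Vector_Spaces.linear_iff by blast

lemma lin_sc: "lin f \<Longrightarrow> f (smult c x) = c * f x"
  unfolding lin_fun_def Vector_Spaces.linear_iff by blast

lemma linI: "(\<And>x y. f (x + y) = f x + f y) \<Longrightarrow> (\<And>c x. f (smult c x) = c * f x) \<Longrightarrow> lin f"
  unfolding lin_fun_def Vector_Spaces.linear_iff using vs vs_k by blast

lemma lin_0: "lin f \<Longrightarrow> f 0 = 0"
  using lin_sc[of f 0 0] by simp

lemma lin_diff: "lin f \<Longrightarrow> f (x - y) = f x - f y"
  using lin_add[of f "x - y" y] by simp

lemma lin_sum_list: "lin f \<Longrightarrow> f (sum_list (map g xs)) = sum_list (map (\<lambda>u. f (g u)) xs)"
  by (induction xs) (simp_all add: lin_0 lin_add)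

lemma lin_sum_list_sc: "lin f \<Longrightarrow>
   f (sum_list (map (\<lambda>u. smult (c u) (g u)) xs)) = sum_list (map (\<lambda>u. c u * f (g u)) xs)"
  by (simp add: lin_sum_list lin_sc)

lemma lin_sum: "lin f \<Longrightarrow> f (sum g A) = (\<Sum>a\<in>A. f (g a))"
  by (induction A rule: infinite_finite_induct) (simp_all add: lin_0 lin_add)

lemma lin_plus: "lin f \<Longrightarrow> lin g \<Longrightarrow> lin (\<lambda>x. f x + g x)"
  by (rule linI) (simp_all add: lin_add lin_sc algebra_simps)

lemma lin_fplus: "lin f \<Longrightarrow> lin g \<Longrightarrow> lin (f + g)"
  unfolding plus_fun_def by (rule lin_plus)

lemma lin_cmul: "lin f \<Longrightarrow> lin (\<lambda>x. c * f x)"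
  by (rule linI) (simp_all add: lin_add lin_sc algebra_simps)

lemma lin_mulc: "lin f \<Longrightarrow> lin (\<lambda>x. f x * c)"
  by (rule linI) (simp_all add: lin_add lin_sc algebra_simps)

lemma lin_scf: "lin f \<Longrightarrow> lin (sc c f)"
  unfolding sc_def by (rule lin_cmul)

lemma lin_zero: "lin (\<lambda>x. 0)"
  by (rule linI) simp_all

lemma lin_zero': "lin 0"
  unfolding zero_fun_def by (rule lin_zero)

lemma lin_minus: "lin f \<Longrightarrow> lin g \<Longrightarrow> lin (\<lambda>x. f x - g x)"
  by (rule linI) (simp_all add: lin_add lin_sc algebra_simps)

lemma lin_fminus: "lin f \<Longrightarrow> lin g \<Longrightarrow> lin (f - g)"
  unfolding fun_diff_def by (rule lin_minus)

lemma lin_sum_list_fun: "(\<And>z. z \<in> set zs \<Longrightarrow> lin (G z)) \<Longrightarrow> lin (\<lambda>x. sum_list (map (\<lambda>z. G z x) zs))"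
proof (induction zs)
  case Nil
  then show ?case using lin_zero by simp
next
  case (Cons a zs)
  then show ?case using lin_plus[of "G a" "\<lambda>x. sum_list (map (\<lambda>z. G z x) zs)"] by simp
qed

lemma conv_lin: "lin f \<Longrightarrow> lin g \<Longrightarrow> lin (conv cop f g)"
  unfolding conv_def using F_copadd F_copsc by (intro linI) blast+

lemma cop_grad: "x \<in> H n \<Longrightarrow> u \<in> set (cop x) \<Longrightarrow> \<exists>i\<le>n. fst u \<in> H i \<and> snd u \<in> H (n - i)"
  using F_grad by (cases u) fastforce

lemma counit_l: "sum_list (map (\<lambda>u. smult (eps (fst u)) (snd u)) (cop x)) = x"
  using F_cl by (simp add: case_prod_unfold)

lemma counit_r: "sum_list (map (\<lambda>u. smult (eps (snd u)) (fst u)) (cop x)) = x"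
  using F_cr by (simp add: case_prod_unfold)

lemma conv_unit_l: "lin f \<Longrightarrow> conv cop eps f = f"
proof
  fix x assume f: "lin f"
  have "conv cop eps f x = sum_list (map (\<lambda>u. eps (fst u) * f (snd u)) (cop x))"
    unfolding conv_def pairsum_alt ..
  also have "\<dots> = f (sum_list (map (\<lambda>u. smult (eps (fst u)) (snd u)) (cop x)))"
    by (rule lin_sum_list_sc[OF f, symmetric])
  also have "\<dots> = f x" by (simp only: counit_l)
  finally show "conv cop eps f x = f x" .
qed

lemma conv_unit_r: "lin f \<Longrightarrow> conv cop f eps = f"
proof
  fix x assume f: "lin f"
  have "conv cop f eps x = sum_list (map (\<lambda>u. eps (snd u) * f (fst u)) (cop x))"
    unfolding conv_def pairsum_alt by (simp add: mult.commute)
  also have "\<dots> = f (sum_list (map (\<lambda>u. smult (eps (snd u)) (fst u)) (cop x)))"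
    by (rule lin_sum_list_sc[OF f, symmetric])
  also have "\<dots> = f x" by (simp only: counit_r)
  finally show "conv cop f eps x = f x" .
qed

lemma conv_assoc: "lin f \<Longrightarrow> lin g \<Longrightarrow> lin k \<Longrightarrow> conv cop (conv cop f g) k = conv cop f (conv cop g k)"
  using F_coassoc by blast

lemma Hsub: "vs.subspace (H n)"
  using F_sub by blast

lemma indep: "(\<And>n. xs n \<in> H n) \<Longrightarrow> (\<Sum>n\<le>N. xs n) = 0 \<Longrightarrow> n \<le> N \<Longrightarrow> xs n = 0"
  using F_indep by blast

lemma decomp_span: "x \<in> vs.span (\<Union>n\<le>N. H n) \<Longrightarrow> \<exists>xs. (\<forall>n. xs n \<in> H n) \<and> x = (\<Sum>n\<le>N. xs n)"
proof (induction rule: vs.span_induct_alt)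
  case base
  have "\<forall>n. (\<lambda>n. 0::'h) n \<in> H n" using vs.subspace_0[OF Hsub] by simp
  then show ?case by (intro exI[of _ "\<lambda>n. 0"]) simp
next
  case (step c z y)
  then obtain m where m: "m \<le> N" "z \<in> H m" by blast
  from step obtain ys where ys: "\<forall>n. ys n \<in> H n" "y = (\<Sum>n\<le>N. ys n)" by blast
  define xs where "xs n = (if n = m then smult c z + ys n else ys n)" for n
  have "\<forall>n. xs n \<in> H n" using ys(1) m(2) vs.subspace_add[OF Hsub] vs.subspace_scale[OF Hsub]
    unfolding xs_def by auto
  moreover have "smult c z + y = (\<Sum>n\<le>N. xs n)"
  proof -
    have "(\<Sum>n\<le>N. xs n) = (\<Sum>n\<le>N. (if n = m then smult c z else 0) + ys n)"
      unfolding xs_def by (intro sum.cong) auto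
    also have "\<dots> = smult c z + (\<Sum>n\<le>N. ys n)" using m(1) by (simp add: sum.distrib)
    finally show ?thesis using ys(2) by simp
  qed
  ultimately show ?case by blast
qed

lemma decomp: "\<exists>N xs. (\<forall>n. xs n \<in> H n) \<and> x = (\<Sum>n\<le>N. xs n)"
  using F_span decomp_span by blast

lemma sum_pad: "(N::nat) \<le> K \<Longrightarrow> (\<Sum>n\<le>N. xs n) = (\<Sum>n\<le>K. if n \<le> N then xs n else (0::'h))"
proof -
  assume "N \<le> K"
  then have "{..K} \<inter> {n. n \<le> N} = {..N}" by auto
  then show ?thesis by (simp add: sum.If_cases)
qed

lemma decomp_unique:
  assumes "\<And>n. xs n \<in> H n" "\<And>n. ys n \<in> H n" "(\<Sum>n\<le>N. xs n) = (\<Sum>n\<le>N. ys n)" "n \<le> N"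
  shows "xs n = ys n"
proof -
  have "(\<Sum>n\<le>N. xs n - ys n) = 0" using assms(3) by (simp add: sum_subtractf)
  moreover have "\<And>n. xs n - ys n \<in> H n" using assms(1,2) vs.subspace_diff[OF Hsub] by blast
  ultimately have "xs n - ys n = 0" using indep[of "\<lambda>n. xs n - ys n" N n] assms(4) by blast
  then show ?thesis by simp
qed

definition dbd where "dbd x = (SOME N. \<exists>xs. (\<forall>n. xs n \<in> H n) \<and> x = (\<Sum>n\<le>N. xs n))"
definition dcs where "dcs x = (SOME xs. (\<forall>n. xs n \<in> H n) \<and> x = (\<Sum>n\<le>dbd x. xs n))"
definition proj where "proj n x = (if n \<le> dbd x then dcs x n else 0)"

lemma dcs_prop: "(\<forall>n. dcs x n \<in> H n) \<and> x = (\<Sum>n\<le>dbd x. dcs x n)"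
proof -
  have "\<exists>xs. (\<forall>n. xs n \<in> H n) \<and> x = (\<Sum>n\<le>dbd x. xs n)"
    unfolding dbd_def by (rule someI_ex) (rule decomp)
  then show ?thesis unfolding dcs_def by (rule someI_ex)
qed

lemma H0el: "0 \<in> H n"
  by (rule vs.subspace_0[OF Hsub])

lemma proj_eq:
  assumes xs: "\<forall>n. xs n \<in> H n" and x: "x = (\<Sum>n\<le>N. xs n)"
  shows "proj n x = (if n \<le> N then xs n else 0)"
proof -
  define K where "K = max N (dbd x)"
  define a where "a n = (if n \<le> N then xs n else 0)" for n
  define b where "b n = (if n \<le> dbd x then dcs x n else 0)" for n
  have aH: "\<And>n. a n \<in> H n" unfolding a_def using xs H0el by simp
  have bH: "\<And>n. b n \<in> H n" unfolding b_def using dcs_prop H0el by simp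
  have "(\<Sum>n\<le>K. a n) = x" using sum_pad[of N K xs] x unfolding a_def K_def by simp
  moreover have "(\<Sum>n\<le>K. b n) = x" using sum_pad[of "dbd x" K "dcs x"] dcs_prop[of x]
    unfolding b_def K_def by simp
  ultimately have ab: "n \<le> K \<Longrightarrow> a n = b n" for n using decomp_unique[OF aH bH] by metis
  show ?thesis
  proof (cases "n \<le> K")
    case True
    then show ?thesis using ab[OF True] unfolding proj_def a_def b_def by simp
  next
    case False
    then show ?thesis unfolding proj_def K_def by (auto simp: le_max_iff_disj)
  qed
qed

lemma proj_H: "proj n x \<in> H n"
  unfolding proj_def using dcs_prop H0el by simp

lemma proj_sum: "dbd x \<le> K \<Longrightarrow> x = (\<Sum>n\<le>K. proj n x)"
  using sum_pad[of "dbd x" K "dcs x"] dcs_prop[of x] unfolding proj_def by simp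

lemma proj_zero: "dbd x < n \<Longrightarrow> proj n x = 0"
  unfolding proj_def by simp

lemma proj_add: "proj n (x + y) = proj n x + proj n y"
proof -
  define K where "K = max (dbd x) (dbd y)"
  have "x + y = (\<Sum>n\<le>K. proj n x + proj n y)"
    using proj_sum[of x K] proj_sum[of y K] unfolding K_def by (simp add: sum.distrib)
  moreover have "\<forall>n. proj n x + proj n y \<in> H n" using proj_H vs.subspace_add[OF Hsub] by blast
  ultimately have "proj n (x + y) = (if n \<le> K then proj n x + proj n y else 0)"
    by (intro proj_eq) simp_all
  then show ?thesis using proj_zero[of x n] proj_zero[of y n] unfolding K_def
    by (cases "n \<le> max (dbd x) (dbd y)") auto
qed

lemma proj_sc: "proj n (smult c x) = smult c (proj n x)"
proof -
  define K where "K = dbd x"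
  have "smult c x = smult c (\<Sum>n\<le>K. proj n x)"
    using proj_sum[of x K] unfolding K_def by simp
  also have "\<dots> = (\<Sum>n\<le>K. smult c (proj n x))" by (rule vs.scale_sum_right)
  finally have "smult c x = (\<Sum>n\<le>K. smult c (proj n x))" .
  moreover have "\<forall>n. smult c (proj n x) \<in> H n" using proj_H vs.subspace_scale[OF Hsub] by blast
  ultimately have "proj n (smult c x) = (if n \<le> K then smult c (proj n x) else 0)"
    by (intro proj_eq) simp_all
  then show ?thesis using proj_zero[of x n] unfolding K_def
    by (cases "n \<le> dbd x") auto
qed

lemma proj_self: "h \<in> H m \<Longrightarrow> proj n h = (if n = m then h else 0)"
proof -
  assume h: "h \<in> H m"
  define xs where "xs n = (if n = m then h else 0)" for n
  have "\<forall>n. xs n \<in> H n" unfolding xs_def using h H0el by simp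
  moreover have "h = (\<Sum>n\<le>m. xs n)" unfolding xs_def by simp
  ultimately have "proj n h = (if n \<le> m then xs n else 0)" by (rule proj_eq)
  then show ?thesis unfolding xs_def by auto
qed

lemma lin_eq:
  assumes f: "lin f" and g: "lin g" and fg: "\<And>n h. h \<in> H n \<Longrightarrow> f h = g h"
  shows "f = g"
proof
  fix x
  have "f x = f (\<Sum>n\<le>dbd x. proj n x)" using proj_sum[of x "dbd x"] by simp
  also have "\<dots> = (\<Sum>n\<le>dbd x. f (proj n x))" by (rule lin_sum[OF f])
  also have "\<dots> = (\<Sum>n\<le>dbd x. g (proj n x))" using fg[OF proj_H] by simp
  also have "\<dots> = g (\<Sum>n\<le>dbd x. proj n x)" by (rule lin_sum[OF g, symmetric])
  also have "\<dots> = g x" using proj_sum[of x "dbd x"] by simp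
  finally show "f x = g x" .
qed

definition glue where "glue F x = (\<Sum>n\<le>dbd x. F n (proj n x))"

lemma glue_ext:
  assumes F: "\<And>n. lin (F n)" and K: "dbd x \<le> K"
  shows "glue F x = (\<Sum>n\<le>K. F n (proj n x))"
  unfolding glue_def
proof (rule sum.mono_neutral_left)
  show "finite {..K}" by simp
  show "{..dbd x} \<subseteq> {..K}" using K by auto
  show "\<forall>i\<in>{..K} - {..dbd x}. F i (proj i x) = 0" using proj_zero lin_0[OF F] by auto
qed

lemma glue_lin:
  assumes F: "\<And>n. lin (F n)"
  shows "lin (glue F)"
proof (rule linI)
  fix x y
  define K where "K = max (dbd (x + y)) (max (dbd x) (dbd y))"
  have "glue F (x + y) = (\<Sum>n\<le>K. F n (proj n (x + y)))" by (rule glue_ext[OF F]) (simp add: K_def)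
  also have "\<dots> = (\<Sum>n\<le>K. F n (proj n x) + F n (proj n y))" by (simp add: proj_add lin_add[OF F])
  also have "\<dots> = (\<Sum>n\<le>K. F n (proj n x)) + (\<Sum>n\<le>K. F n (proj n y))" by (rule sum.distrib)
  also have "\<dots> = glue F x + glue F y"
    using glue_ext[OF F, of x K] glue_ext[OF F, of y K] by (simp add: K_def)
  finally show "glue F (x + y) = glue F x + glue F y" .
next
  fix c x
  define K where "K = max (dbd (smult c x)) (dbd x)"
  have "glue F (smult c x) = (\<Sum>n\<le>K. F n (proj n (smult c x)))" by (rule glue_ext[OF F]) (simp add: K_def)
  also have "\<dots> = (\<Sum>n\<le>K. c * F n (proj n x))" by (simp add: proj_sc lin_sc[OF F])
  also have "\<dots> = c * (\<Sum>n\<le>K. F n (proj n x))" by (simp add: sum_distrib_left)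
  also have "\<dots> = c * glue F x"
    using glue_ext[OF F, of x K] by (simp add: K_def)
  finally show "glue F (smult c x) = c * glue F x" .
qed

lemma glue_H:
  assumes F: "\<And>n. lin (F n)" and h: "h \<in> H m"
  shows "glue F h = F m h"
proof -
  define K where "K = max m (dbd h)"
  have "glue F h = (\<Sum>n\<le>K. F n (proj n h))" by (rule glue_ext[OF F]) (simp add: K_def)
  also have "\<dots> = (\<Sum>n\<le>K. if n = m then F m h else 0)"
    by (intro sum.cong refl) (simp add: proj_self[OF h] lin_0[OF F])
  also have "\<dots> = F m h" by (simp add: K_def)
  finally show ?thesis .
qed

definition V1 where "V1 = {f. lin f}"
definition I1 where "I1 n = {f. lin f \<and> (\<forall>m<n. \<forall>h\<in>H m. f h = 0)}"

lemma I1_mult: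
  assumes f: "f \<in> I1 a" and g: "g \<in> I1 b"
  shows "conv cop f g \<in> I1 (a + b)"
proof -
  have "conv cop f g h = 0" if mab: "m < a + b" and h: "h \<in> H m" for m h
  proof -
    have "conv cop f g h = sum_list (map (\<lambda>u. f (fst u) * g (snd u)) (cop h))"
      unfolding conv_def pairsum_alt ..
    also have "\<dots> = 0"
    proof (rule sum_list_zero)
      fix u assume "u \<in> set (cop h)"
      then obtain i where i: "i \<le> m" "fst u \<in> H i" "snd u \<in> H (m - i)" using cop_grad h by blast
      show "f (fst u) * g (snd u) = 0"
      proof (cases "i < a")
        case True
        then have "f (fst u) = 0" using f i unfolding I1_def by blast
        then show ?thesis by simp
      next
        case False
        then have "m - i < b" using mab i(1) by linarith
        then have "g (snd u) = 0" using g i unfolding I1_def by blast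
        then show ?thesis by simp
      qed
    qed
    finally show ?thesis .
  qed
  moreover have "lin (conv cop f g)" using f g unfolding I1_def by (blast intro: conv_lin)
  ultimately show ?thesis unfolding I1_def by blast
qed

lemma I1_sep:
  assumes "\<And>n. f \<in> I1 n"
  shows "f = 0"
proof (rule lin_eq)
  show "lin f" using assms[of 0] unfolding I1_def by blast
  show "lin 0" by (rule lin_zero')
  fix n h assume "h \<in> H n"
  then show "f h = 0 h" using assms[of "Suc n"] unfolding I1_def by auto
qed

lemma I1_complete:
  assumes FV: "\<And>k. F k \<in> V1" and Fd: "\<And>k. F (Suc k) - F k \<in> I1 k"
  shows "\<exists>r\<in>V1. \<forall>k. r - F k \<in> I1 k"
proof -
  have Flin: "lin (F k)" for k using FV unfolding V1_def by blast
  define r where "r = glue (\<lambda>n. F (Suc n))"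
  have rlin: "lin r" unfolding r_def by (rule glue_lin) (rule Flin)
  have stab: "F k h = F (Suc m) h" if "Suc m \<le> k" "h \<in> H m" for k m h
    using that(1)
  proof (induction k rule: dec_induct)
    case base
    then show ?case by simp
  next
    case (step j)
    have "\<forall>m<j. \<forall>h\<in>H m. (F (Suc j) - F j) h = 0" using Fd[of j] unfolding I1_def by blast
    moreover have "m < j" using step(1) by simp
    ultimately have "(F (Suc j) - F j) h = 0" using that(2) by blast
    then show ?case using step(3) by simp
  qed
  have "r - F k \<in> I1 k" for k
    unfolding I1_def
  proof (intro CollectI conjI allI impI ballI)
    show "lin (r - F k)" using rlin Flin by (rule lin_fminus)
    fix m h assume mk: "m < k" and h: "h \<in> H m"
    have "r h = F (Suc m) h" unfolding r_def using glue_H[of "\<lambda>n. F (Suc n)", OF Flin h] .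
    then show "(r - F k) h = 0" using stab[of m k h] mk h by simp
  qed
  then show ?thesis using rlin unfolding V1_def by blast
qed

sublocale c1: cva_a V1 "conv cop" eps I1
proof unfold_locales
  show "f \<in> V1 \<Longrightarrow> g \<in> V1 \<Longrightarrow> f + g \<in> V1" for f g unfolding V1_def by (simp add: lin_fplus)
  show "f \<in> V1 \<Longrightarrow> sc c f \<in> V1" for f c unfolding V1_def by (simp add: lin_scf)
  show "eps \<in> V1" unfolding V1_def using eps_lin by simp
  show "f \<in> V1 \<Longrightarrow> g \<in> V1 \<Longrightarrow> conv cop f g \<in> V1" for f g unfolding V1_def by (simp add: conv_lin)
  show "conv cop (f + g) h = conv cop f h + conv cop g h" for f g h by (rule conv_addl)
  show "conv cop f (g + h) = conv cop f g + conv cop f h" for f g h by (rule conv_addr)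
  show "conv cop (sc c f) g = sc c (conv cop f g)" for c f g by (rule conv_scl)
  show "conv cop f (sc c g) = sc c (conv cop f g)" for c f g by (rule conv_scr)
  show "f \<in> V1 \<Longrightarrow> conv cop eps f = f" for f unfolding V1_def by (simp add: conv_unit_l)
  show "f \<in> V1 \<Longrightarrow> conv cop f eps = f" for f unfolding V1_def by (simp add: conv_unit_r)
  show "I1 n \<subseteq> V1" for n unfolding V1_def I1_def by blast
  show "0 \<in> I1 n" for n unfolding I1_def using lin_zero' by simp
  show "f \<in> I1 n \<Longrightarrow> g \<in> I1 n \<Longrightarrow> f + g \<in> I1 n" for f g n
    unfolding I1_def by (simp add: lin_fplus)
  show "f \<in> I1 n \<Longrightarrow> sc c f \<in> I1 n" for f n c
    unfolding I1_def using lin_scf[of f c] by (simp add: sc_def)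
  show "I1 0 = V1" unfolding I1_def V1_def by simp
  show "I1 (Suc n) \<subseteq> I1 n" for n unfolding I1_def using less_SucI by blast
  show "f \<in> I1 a \<Longrightarrow> g \<in> I1 b \<Longrightarrow> conv cop f g \<in> I1 (a + b)" for f g a b by (rule I1_mult)
  show "(\<And>n. f \<in> I1 n) \<Longrightarrow> f = 0" for f by (rule I1_sep)
  show "(\<And>k. F k \<in> V1) \<Longrightarrow> (\<And>k. F (Suc k) - F k \<in> I1 k) \<Longrightarrow> \<exists>r\<in>V1. \<forall>k. r - F k \<in> I1 k" for F
    by (rule I1_complete)
  show "f \<in> V1 \<Longrightarrow> g \<in> V1 \<Longrightarrow> h \<in> V1 \<Longrightarrow> conv cop (conv cop f g) h = conv cop f (conv cop g h)"
    for f g h unfolding V1_def by (simp add: conv_assoc)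
qed

definition V2 :: "('h \<times> 'h \<Rightarrow> 'k) set" where
  "V2 = {B. (\<forall>y. lin (\<lambda>x. B (x, y))) \<and> (\<forall>x. lin (\<lambda>y. B (x, y)))}"
definition cv2 :: "('h \<times> 'h \<Rightarrow> 'k) \<Rightarrow> ('h \<times> 'h \<Rightarrow> 'k) \<Rightarrow> 'h \<times> 'h \<Rightarrow> 'k" where
  "cv2 B C p = sum_list (map (\<lambda>u. sum_list (map (\<lambda>v. B (fst u, fst v) * C (snd u, snd v))
      (cop (snd p)))) (cop (fst p)))"
definition e2 :: "'h \<times> 'h \<Rightarrow> 'k" where "e2 p = eps (fst p) * eps (snd p)"
definition I2 :: "nat \<Rightarrow> ('h \<times> 'h \<Rightarrow> 'k) set" where
  "I2 n = {B \<in> V2. \<forall>i j x y. i + j < n \<longrightarrow> x \<in> H i \<longrightarrow> y \<in> H j \<longrightarrow> B (x, y) = 0}"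

lemma V2_1: "B \<in> V2 \<Longrightarrow> lin (\<lambda>x. B (x, y))" unfolding V2_def by blast
lemma V2_2: "B \<in> V2 \<Longrightarrow> lin (\<lambda>y. B (x, y))" unfolding V2_def by blast

lemma cv2_xy: "cv2 B C (x, y) = sum_list (map (\<lambda>u. conv cop (\<lambda>c. B (fst u, c)) (\<lambda>d. C (snd u, d)) y) (cop x))"
  unfolding cv2_def conv_def pairsum_alt by simp

lemma cv2_yx: "cv2 B C (x, y) = sum_list (map (\<lambda>v. conv cop (\<lambda>a. B (a, fst v)) (\<lambda>b. C (b, snd v)) x) (cop y))"
  unfolding cv2_def conv_def pairsum_alt fst_conv snd_conv by (rule sum_list_swap)

lemma cv2_V: assumes B: "B \<in> V2" and C: "C \<in> V2" shows "cv2 B C \<in> V2"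
  unfolding V2_def
proof (intro CollectI conjI allI)
  fix y
  show "lin (\<lambda>x. cv2 B C (x, y))" unfolding cv2_yx
    by (rule lin_sum_list_fun) (intro conv_lin V2_1[OF B] V2_1[OF C])
next
  fix x
  show "lin (\<lambda>y. cv2 B C (x, y))" unfolding cv2_xy
    by (rule lin_sum_list_fun) (intro conv_lin V2_2[OF B] V2_2[OF C])
qed

lemma cv2_addl: "cv2 (B + B') C = cv2 B C + cv2 B' C"
  unfolding fun_eq_iff cv2_def by (simp add: distrib_right sum_list_addf)

lemma cv2_addr: "cv2 B (C + C') = cv2 B C + cv2 B C'"
  unfolding fun_eq_iff cv2_def by (simp add: distrib_left sum_list_addf)

lemma cv2_scl: "cv2 (sc c B) C = sc c (cv2 B C)"
  unfolding fun_eq_iff cv2_def sc_def by (simp add: sum_list_const_mult mult.assoc)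

lemma aux_cm: "sum_list (map (\<lambda>v. a v * (c * b v)) ys) = c * sum_list (map (\<lambda>v. a v * b v) ys)"
  for a b :: "_ \<Rightarrow> 'k"
  by (induction ys) (simp_all add: algebra_simps)

lemma aux_cm2: "sum_list (map (\<lambda>v. b v * (c * e v)) ys) = c * sum_list (map (\<lambda>v. e v * b v) ys)"
  for b e :: "_ \<Rightarrow> 'k"
  by (induction ys) (simp_all add: algebra_simps)

lemma cv2_scr: "cv2 B (sc c C) = sc c (cv2 B C)"
  unfolding fun_eq_iff cv2_def sc_def by (simp add: aux_cm sum_list_const_mult)

lemma e2_V: "e2 \<in> V2"
  unfolding V2_def e2_def using lin_mulc[OF eps_lin] lin_cmul[OF eps_lin] by simp

lemma cv2_unit_l:
  assumes B: "B \<in> V2" shows "cv2 e2 B = B"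
proof
  fix p :: "'h \<times> 'h"
  obtain x y where p: "p = (x, y)" by (cases p)
  have inner: "sum_list (map (\<lambda>v. eps (fst v) * B (b, snd v)) (cop y)) = B (b, y)" for b
    using lin_sum_list_sc[OF V2_2[OF B, of b], of "\<lambda>v. eps (fst v)" snd "cop y"] counit_l by simp
  have "cv2 e2 B (x, y) = sum_list (map (\<lambda>u. eps (fst u) *
       sum_list (map (\<lambda>v. eps (fst v) * B (snd u, snd v)) (cop y))) (cop x))"
    unfolding cv2_def e2_def by (simp add: sum_list_const_mult mult.assoc)
  also have "\<dots> = sum_list (map (\<lambda>u. eps (fst u) * B (snd u, y)) (cop x))" by (simp only: inner)
  also have "\<dots> = B (x, y)"
    using lin_sum_list_sc[OF V2_1[OF B, of y], of "\<lambda>u. eps (fst u)" snd "cop x"] counit_l by simp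
  finally show "cv2 e2 B p = B p" unfolding p .
qed

lemma cv2_unit_r:
  assumes B: "B \<in> V2" shows "cv2 B e2 = B"
proof
  fix p :: "'h \<times> 'h"
  obtain x y where p: "p = (x, y)" by (cases p)
  have inner: "sum_list (map (\<lambda>v. eps (snd v) * B (a, fst v)) (cop y)) = B (a, y)" for a
    using lin_sum_list_sc[OF V2_2[OF B, of a], of "\<lambda>v. eps (snd v)" fst "cop y"] counit_r by simp
  have "cv2 B e2 (x, y) = sum_list (map (\<lambda>u. eps (snd u) *
       sum_list (map (\<lambda>v. eps (snd v) * B (fst u, fst v)) (cop y))) (cop x))"
    unfolding cv2_def e2_def by (simp add: aux_cm2)
  also have "\<dots> = sum_list (map (\<lambda>u. eps (snd u) * B (fst u, y)) (cop x))" by (simp only: inner)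
  also have "\<dots> = B (x, y)"
    using lin_sum_list_sc[OF V2_1[OF B, of y], of "\<lambda>u. eps (snd u)" fst "cop x"] counit_r by simp
  finally show "cv2 B e2 p = B p" unfolding p .
qed

lemma I2_mult:
  assumes B: "B \<in> I2 a" and C: "C \<in> I2 b"
  shows "cv2 B C \<in> I2 (a + b)"
proof -
  have BV: "B \<in> V2" and CV: "C \<in> V2" using B C unfolding I2_def by auto
  have "cv2 B C (x, y) = 0" if ij: "i + j < a + b" and x: "x \<in> H i" and y: "y \<in> H j" for i j x y
    unfolding cv2_def fst_conv snd_conv
  proof (intro sum_list_zero)
    fix u v assume u: "u \<in> set (cop x)" and v: "v \<in> set (cop y)"
    obtain p where p: "p \<le> i" "fst u \<in> H p" "snd u \<in> H (i - p)" using cop_grad[OF x u] by blast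
    obtain q where q: "q \<le> j" "fst v \<in> H q" "snd v \<in> H (j - q)" using cop_grad[OF y v] by blast
    show "B (fst u, fst v) * C (snd u, snd v) = 0"
    proof (cases "p + q < a")
      case True
      then have "B (fst u, fst v) = 0" using B p q unfolding I2_def by blast
      then show ?thesis by simp
    next
      case False
      then have "(i - p) + (j - q) < b" using ij p(1) q(1) by linarith
      then have "C (snd u, snd v) = 0" using C p q unfolding I2_def by blast
      then show ?thesis by simp
    qed
  qed
  then show ?thesis unfolding I2_def using cv2_V[OF BV CV] by blast
qed

lemma I2_sep:
  assumes B: "\<And>n. B \<in> I2 n"
  shows "B = 0"
proof
  fix p :: "'h \<times> 'h"
  obtain x y where p: "p = (x, y)" by (cases p)
  have BV: "B \<in> V2" using B[of 0] unfolding I2_def by blast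
  have z: "B (proj i x, proj j y) = 0" for i j
    using B[of "Suc (i + j)"] proj_H[of i x] proj_H[of j y] unfolding I2_def by blast
  have "B (x, y) = B (\<Sum>i\<le>dbd x. proj i x, y)" using proj_sum[of x "dbd x"] by simp
  also have "\<dots> = (\<Sum>i\<le>dbd x. B (proj i x, y))" by (rule lin_sum[OF V2_1[OF BV]])
  also have "\<dots> = (\<Sum>i\<le>dbd x. B (proj i x, \<Sum>j\<le>dbd y. proj j y))" using proj_sum[of y "dbd y"] by simp
  also have "\<dots> = (\<Sum>i\<le>dbd x. \<Sum>j\<le>dbd y. B (proj i x, proj j y))"
    by (intro sum.cong refl lin_sum[OF V2_2[OF BV]])
  also have "\<dots> = 0" by (simp add: z)
  finally show "B p = 0 p" unfolding p by simp
qed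

sublocale c2: cva V2 cv2 e2 I2
proof unfold_locales
  show "f \<in> V2 \<Longrightarrow> g \<in> V2 \<Longrightarrow> f + g \<in> V2" for f g
    unfolding V2_def using lin_plus by simp
  show "f \<in> V2 \<Longrightarrow> sc c f \<in> V2" for f c
    unfolding V2_def sc_def using lin_cmul by simp
  show "e2 \<in> V2" by (rule e2_V)
  show "f \<in> V2 \<Longrightarrow> g \<in> V2 \<Longrightarrow> cv2 f g \<in> V2" for f g by (rule cv2_V)
  show "cv2 (f + g) h = cv2 f h + cv2 g h" for f g h by (rule cv2_addl)
  show "cv2 f (g + h) = cv2 f g + cv2 f h" for f g h by (rule cv2_addr)
  show "cv2 (sc c f) g = sc c (cv2 f g)" for c f g by (rule cv2_scl)
  show "cv2 f (sc c g) = sc c (cv2 f g)" for c f g by (rule cv2_scr)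
  show "f \<in> V2 \<Longrightarrow> cv2 e2 f = f" for f by (rule cv2_unit_l)
  show "f \<in> V2 \<Longrightarrow> cv2 f e2 = f" for f by (rule cv2_unit_r)
  show "I2 n \<subseteq> V2" for n unfolding I2_def by blast
  show "0 \<in> I2 n" for n unfolding I2_def V2_def using lin_zero by simp
  show "f \<in> I2 n \<Longrightarrow> g \<in> I2 n \<Longrightarrow> f + g \<in> I2 n" for f g n
    unfolding I2_def V2_def using lin_plus by simp
  show "f \<in> I2 n \<Longrightarrow> sc c f \<in> I2 n" for f n c
    unfolding I2_def V2_def sc_def using lin_cmul by simp
  show "I2 0 = V2" unfolding I2_def by simp
  show "I2 (Suc n) \<subseteq> I2 n" for n unfolding I2_def using less_SucI by blast
  show "f \<in> I2 a \<Longrightarrow> g \<in> I2 b \<Longrightarrow> cv2 f g \<in> I2 (a + b)" for f g a b by (rule I2_mult)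
  show "(\<And>n. f \<in> I2 n) \<Longrightarrow> f = 0" for f by (rule I2_sep)
qed

lemma mult_V2:
  assumes f: "lin f" shows "(\<lambda>p. f (fst p * snd p)) \<in> V2"
  unfolding V2_def
proof (intro CollectI conjI allI)
  fix y
  show "lin (\<lambda>x. f (fst (x, y) * snd (x, y)))"
  proof (rule linI)
    show "f (fst (x + x', y) * snd (x + x', y)) = f (fst (x, y) * snd (x, y)) + f (fst (x', y) * snd (x', y))" for x x'
      by (simp add: distrib_right lin_add[OF f])
    show "f (fst (smult c x, y) * snd (smult c x, y)) = c * f (fst (x, y) * snd (x, y))" for c x
      using F_alg lin_sc[OF f] by (metis fst_conv snd_conv)
  qed
next
  fix x
  show "lin (\<lambda>y. f (fst (x, y) * snd (x, y)))"
  proof (rule linI)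
    show "f (fst (x, y + y') * snd (x, y + y')) = f (fst (x, y) * snd (x, y)) + f (fst (x, y') * snd (x, y'))" for y y'
      by (simp add: distrib_left lin_add[OF f])
    show "f (fst (x, smult c y) * snd (x, smult c y)) = c * f (fst (x, y) * snd (x, y))" for c y
      using F_alg lin_sc[OF f] by (metis fst_conv snd_conv)
  qed
qed

lemma tens_V2:
  assumes f: "lin f" and g: "lin g" shows "(\<lambda>p. f (fst p) * g (snd p)) \<in> V2"
  unfolding V2_def using lin_mulc[OF f] lin_cmul[OF g] by simp

lemma cv2_mult:
  assumes f: "lin f" and g: "lin g"
  shows "cv2 (\<lambda>p. f (fst p * snd p)) (\<lambda>p. g (fst p * snd p)) = (\<lambda>p. conv cop f g (fst p * snd p))"
proof
  fix p :: "'h \<times> 'h"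
  have "pairsum f g (cop (fst p * snd p)) =
        sum_list (map (\<lambda>(a, b). sum_list (map (\<lambda>(c, d). f (a * c) * g (b * d)) (cop (snd p)))) (cop (fst p)))"
    using F_bialg f g by blast
  then show "cv2 (\<lambda>p. f (fst p * snd p)) (\<lambda>p. g (fst p * snd p)) p = conv cop f g (fst p * snd p)"
    unfolding cv2_def conv_def by (simp add: case_prod_unfold)
qed

lemma cv2_tens:
  "cv2 (\<lambda>p. f (fst p) * f' (snd p)) (\<lambda>p. g (fst p) * g' (snd p))
   = (\<lambda>p. conv cop f g (fst p) * conv cop f' g' (snd p))"
proof
  fix p :: "'h \<times> 'h"
  have "conv cop f g (fst p) * conv cop f' g' (snd p)
     = sum_list (map (\<lambda>u. f (fst u) * g (snd u) * sum_list (map (\<lambda>v. f' (fst v) * g' (snd v)) (cop (snd p)))) (cop (fst p)))"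
    unfolding conv_def pairsum_alt by (rule sum_list_mult_const[symmetric])
  also have "\<dots> = sum_list (map (\<lambda>u. sum_list (map (\<lambda>v. f (fst u) * g (snd u) * (f' (fst v) * g' (snd v))) (cop (snd p)))) (cop (fst p)))"
    by (simp only: sum_list_const_mult)
  also have "\<dots> = cv2 (\<lambda>p. f (fst p) * f' (snd p)) (\<lambda>p. g (fst p) * g' (snd p)) p"
    unfolding cv2_def by (simp add: ac_simps)
  finally show "cv2 (\<lambda>p. f (fst p) * f' (snd p)) (\<lambda>p. g (fst p) * g' (snd p)) p
     = conv cop f g (fst p) * conv cop f' g' (snd p)" by simp
qed

lemma one_H0: "1 \<in> H 0"
proof -
  have "1 \<in> range (\<lambda>c. smult c (1::'h))" using rangeI[of "\<lambda>c. smult c (1::'h)" 1] by simp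
  then show ?thesis unfolding F_H0 .
qed

lemma char_rho:
  assumes two: "(2::'k) \<noteq> 0"
    and cf: "character smult \<phi>" and cp: "character smult \<psi>"
    and r: "lin \<rho>" and r0: "\<forall>h\<in>H 0. \<rho> h = eps h"
    and eq: "conv cop (conv cop \<rho> \<psi>) \<rho> = \<phi>"
  shows "character smult \<rho>"
proof -
  have fl: "lin \<phi>" and f1: "\<phi> 1 = 1" and fm: "\<And>x y. \<phi> (x * y) = \<phi> x * \<phi> y"
    using cf unfolding character_def by auto
  have pl: "lin \<psi>" and p1: "\<psi> 1 = 1" and pm: "\<And>x y. \<psi> (x * y) = \<psi> x * \<psi> y"
    using cp unfolding character_def by auto
  have p0: "\<forall>h\<in>H 0. \<psi> h = eps h"
  proof
    fix h assume "h \<in> H 0"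
    then obtain c where c: "h = smult c 1" unfolding F_H0 by blast
    show "\<psi> h = eps h" unfolding c using lin_sc[OF pl] lin_sc[OF eps_lin] p1 eps1 by simp
  qed
  have epsm: "\<And>x y. eps (x * y) = eps x * eps y" using F_epsmult by blast
  have H00: "x \<in> H 0 \<Longrightarrow> y \<in> H 0 \<Longrightarrow> x * y \<in> H 0" for x y using F_Hmult by fastforce
  define B1 where "B1 = (\<lambda>p. \<rho> (fst p * snd p))"
  define B2 where "B2 = (\<lambda>p. \<rho> (fst p) * \<rho> (snd p))"
  define P2 where "P2 = (\<lambda>p. \<psi> (fst p) * \<psi> (snd p))"
  have B1V: "B1 \<in> V2" unfolding B1_def by (rule mult_V2[OF r])
  have B2V: "B2 \<in> V2" unfolding B2_def by (rule tens_V2[OF r r])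
  have P2V: "P2 \<in> V2" unfolding P2_def by (rule tens_V2[OF pl pl])
  have P2m: "P2 = (\<lambda>p. \<psi> (fst p * snd p))" unfolding P2_def using pm by simp
  have I21: "D \<in> V2 \<Longrightarrow> (\<And>x y. x \<in> H 0 \<Longrightarrow> y \<in> H 0 \<Longrightarrow> D (x, y) = 0) \<Longrightarrow> D \<in> I2 1" for D
    unfolding I2_def by auto
  have B11: "B1 - e2 \<in> I2 1"
    by (rule I21[OF c2.V_diff[OF B1V e2_V]]) (simp add: B1_def e2_def r0 H00 epsm)
  have B21: "B2 - e2 \<in> I2 1"
    by (rule I21[OF c2.V_diff[OF B2V e2_V]]) (simp add: B2_def e2_def r0)
  have P21: "P2 - e2 \<in> I2 1"
    by (rule I21[OF c2.V_diff[OF P2V e2_V]]) (simp add: P2_def e2_def p0)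
  have rp: "lin (conv cop \<rho> \<psi>)" by (rule conv_lin[OF r pl])
  have E1: "cv2 (cv2 B1 P2) B1 = (\<lambda>p. \<phi> (fst p * snd p))"
    unfolding B1_def P2m cv2_mult[OF r pl] cv2_mult[OF rp r] eq ..
  have E2: "cv2 (cv2 B2 P2) B2 = (\<lambda>p. \<phi> (fst p) * \<phi> (snd p))"
    unfolding B2_def P2_def cv2_tens eq ..
  have "cv2 (cv2 B1 P2) B1 = cv2 (cv2 B2 P2) B2" unfolding E1 E2 using fm by simp
  then have "B1 = B2" by (rule c2.uniq[OF two B1V B2V P2V B11 B21 P21])
  then have rm: "\<rho> (x * y) = \<rho> x * \<rho> y" for x y
    unfolding B1_def B2_def by (drule_tac x="(x, y)" in fun_cong) simp
  have "\<rho> 1 = 1" using r0 one_H0 eps1 by simp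
  then show ?thesis unfolding character_def using r rm by blast
qed

lemma bar_prop:
  assumes f: "lin f"
  shows "lin (bar smult H f) \<and> (\<forall>n. \<forall>h\<in>H n. bar smult H f h = (-1) ^ n * f h)"
proof -
  have ex: "\<exists>!g. lin g \<and> (\<forall>n. \<forall>h\<in>H n. g h = (-1) ^ n * f h)"
  proof (rule ex_ex1I)
    define F where "F n = (\<lambda>x. (-1) ^ n * f x)" for n
    have Fl: "lin (F n)" for n unfolding F_def by (rule lin_cmul[OF f])
    show "\<exists>g. lin g \<and> (\<forall>n. \<forall>h\<in>H n. g h = (-1) ^ n * f h)"
    proof (intro exI conjI allI ballI)
      show "lin (glue F)" by (rule glue_lin[OF Fl])
      fix n h assume h: "h \<in> H n"
      show "glue F h = (-1) ^ n * f h" using glue_H[OF Fl h] unfolding F_def .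
    qed
  next
    fix g g' assume "lin g \<and> (\<forall>n. \<forall>h\<in>H n. g h = (-1) ^ n * f h)"
      and "lin g' \<and> (\<forall>n. \<forall>h\<in>H n. g' h = (-1) ^ n * f h)"
    then show "g = g'" by (intro lin_eq) simp_all
  qed
  show ?thesis unfolding bar_def by (rule theI'[OF ex])
qed

lemma bar_lin: "lin f \<Longrightarrow> lin (bar smult H f)" using bar_prop by blast
lemma bar_H: "lin f \<Longrightarrow> h \<in> H n \<Longrightarrow> bar smult H f h = (-1) ^ n * f h" using bar_prop by blast

lemma bar_bar: "lin f \<Longrightarrow> bar smult H (bar smult H f) = f"
  by (rule lin_eq) (simp_all add: bar_lin bar_H mult.assoc[symmetric] power_mult_distrib[symmetric])

lemma bar_conv:
  assumes f: "lin f" and g: "lin g"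
  shows "bar smult H (conv cop f g) = conv cop (bar smult H f) (bar smult H g)"
proof (rule lin_eq)
  show "lin (bar smult H (conv cop f g))" by (rule bar_lin[OF conv_lin[OF f g]])
  show "lin (conv cop (bar smult H f) (bar smult H g))" by (rule conv_lin[OF bar_lin[OF f] bar_lin[OF g]])
  fix n h assume h: "h \<in> H n"
  have "conv cop (bar smult H f) (bar smult H g) h
      = sum_list (map (\<lambda>u. (-1) ^ n * (f (fst u) * g (snd u))) (cop h))"
    unfolding conv_def pairsum_alt
  proof (rule arg_cong[where f=sum_list], rule map_cong[OF refl])
    fix u assume "u \<in> set (cop h)"
    then obtain i where i: "i \<le> n" "fst u \<in> H i" "snd u \<in> H (n - i)" using cop_grad h by blast
    have "bar smult H f (fst u) * bar smult H g (snd u) = (-1) ^ i * f (fst u) * ((-1) ^ (n - i) * g (snd u))"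
      using bar_H[OF f i(2)] bar_H[OF g i(3)] by simp
    also have "\<dots> = (-1) ^ (i + (n - i)) * (f (fst u) * g (snd u))" by (simp add: power_add algebra_simps)
    also have "i + (n - i) = n" using i(1) by simp
    finally show "bar smult H f (fst u) * bar smult H g (snd u) = (-1) ^ n * (f (fst u) * g (snd u))" .
  qed
  also have "\<dots> = (-1) ^ n * conv cop f g h" unfolding conv_def pairsum_alt by (rule sum_list_const_mult)
  also have "\<dots> = bar smult H (conv cop f g) h" using bar_H[OF conv_lin[OF f g] h] by simp
  finally show "bar smult H (conv cop f g) h = conv cop (bar smult H f) (bar smult H g) h" by simp
qed

lemma bar_eps: "bar smult H eps = eps"
proof (rule lin_eq)
  show "lin (bar smult H eps)" by (rule bar_lin[OF eps_lin])
  show "lin eps" by (rule eps_lin)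
  fix n h assume h: "h \<in> H n"
  show "bar smult H eps h = eps h"
  proof (cases n)
    case 0
    then show ?thesis using bar_H[OF eps_lin h] by simp
  next
    case (Suc m)
    then have "eps h = 0" using F_epsH h by blast
    then show ?thesis using bar_H[OF eps_lin h] by simp
  qed
qed

lemma G1_iff: "(f \<in> V1 \<and> f - eps \<in> I1 1) \<longleftrightarrow> (lin f \<and> (\<forall>h\<in>H 0. f h = eps h))"
proof
  assume a: "f \<in> V1 \<and> f - eps \<in> I1 1"
  then show "lin f \<and> (\<forall>h\<in>H 0. f h = eps h)" unfolding V1_def I1_def by auto
next
  assume a: "lin f \<and> (\<forall>h\<in>H 0. f h = eps h)"
  then have "lin (f - eps)" using lin_fminus eps_lin by blast
  then show "f \<in> V1 \<and> f - eps \<in> I1 1" using a unfolding V1_def I1_def by auto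
qed

lemma bar_G1: "f \<in> V1 \<Longrightarrow> f - eps \<in> I1 1 \<Longrightarrow> bar smult H f - eps \<in> I1 1"
proof -
  assume a: "f \<in> V1" "f - eps \<in> I1 1"
  then have fl: "lin f" and f0: "\<forall>h\<in>H 0. f h = eps h" using G1_iff by blast+
  have "lin (bar smult H f) \<and> (\<forall>h\<in>H 0. bar smult H f h = eps h)"
    using bar_lin[OF fl] bar_H[OF fl] f0 by simp
  then show ?thesis using G1_iff by blast
qed

lemma conv_inv_is:
  assumes xV: "x \<in> V1" and x1: "x - eps \<in> I1 1"
  shows "\<exists>q. q \<in> V1 \<and> q - eps \<in> I1 1 \<and> conv cop q x = eps \<and> conv cop x q = eps
     \<and> conv_inv smult cop eps x = q"
proof -
  obtain q where q: "q \<in> V1" "q - eps \<in> I1 1" "conv cop q x = eps" "conv cop x q = eps"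
    using c1.inv_ex[OF xV x1] by blast
  have "conv_inv smult cop eps x = q"
    unfolding conv_inv_def
  proof (rule the_equality)
    show "lin q \<and> conv cop q x = eps \<and> conv cop x q = eps" using q unfolding V1_def by blast
    fix g assume "lin g \<and> conv cop g x = eps \<and> conv cop x g = eps"
    then show "g = q" using c1.inv_uniq[OF xV _ q(1), of g] q(4) unfolding V1_def by blast
  qed
  then show ?thesis using q by blast
qed

lemma bar_V1: "f \<in> V1 \<Longrightarrow> bar smult H f \<in> V1"
  unfolding V1_def using bar_lin by blast

lemma bar_bar1: "f \<in> V1 \<Longrightarrow> bar smult H (bar smult H f) = f"
  unfolding V1_def using bar_bar by blast

lemma bar_conv1: "f \<in> V1 \<Longrightarrow> g \<in> V1 \<Longrightarrow>
   bar smult H (conv cop f g) = conv cop (bar smult H f) (bar smult H g)"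
  unfolding V1_def using bar_conv by blast

end

theorem proposition1p4:
  fixes smult :: "'k::field \<Rightarrow> 'h::ring_1 \<Rightarrow> 'h"
    and H :: "nat \<Rightarrow> 'h set" and cop :: "'h \<Rightarrow> ('h \<times> 'h) list"
    and eps :: "'h \<Rightarrow> 'k" and S :: "'h \<Rightarrow> 'h"
    and \<phi> \<psi> :: "'h \<Rightarrow> 'k"
  assumes hopf: "graded_connected_hopf_algebra smult H cop eps S"
    and char: "(2::'k) \<noteq> 0"
    and lin: "lin_fun smult \<phi>" "lin_fun smult \<psi>"
    and deg0: "\<forall>h\<in>H 0. \<phi> h = eps h" "\<forall>h\<in>H 0. \<psi> h = eps h"
  shows "(\<exists>!\<rho>. lin_fun smult \<rho> \<and> \<phi> = conv cop (conv cop \<rho> \<psi>) \<rho> \<and> (\<forall>h\<in>H 0. \<rho> h = eps h))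
    \<and> (\<forall>\<rho>. lin_fun smult \<rho> \<and> \<phi> = conv cop (conv cop \<rho> \<psi>) \<rho> \<and> (\<forall>h\<in>H 0. \<rho> h = eps h) \<longrightarrow>
          (character smult \<phi> \<and> character smult \<psi> \<longrightarrow> character smult \<rho>)
        \<and> (bar smult H \<phi> = conv_inv smult cop eps \<psi> \<longrightarrow> even_fun smult H \<rho>)
        \<and> (bar smult H \<phi> = \<psi> \<longrightarrow> odd_fun smult H cop eps \<rho>))"
proof -
  interpret g: ghopf smult H cop eps S by unfold_locales (rule hopf)
  have fV: "\<phi> \<in> g.V1" and f1: "\<phi> - eps \<in> g.I1 1" using g.G1_iff lin(1) deg0(1) by blast+
  have pV: "\<psi> \<in> g.V1" and p1: "\<psi> - eps \<in> g.I1 1" using g.G1_iff lin(2) deg0(2) by blast+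
  have A: "\<exists>!\<rho>. lin_fun smult \<rho> \<and> \<phi> = conv cop (conv cop \<rho> \<psi>) \<rho> \<and> (\<forall>h\<in>H 0. \<rho> h = eps h)"
  proof -
    obtain \<rho> where rV: "\<rho> \<in> g.V1" and r1: "\<rho> - eps \<in> g.I1 1" and eq: "conv cop (conv cop \<rho> \<psi>) \<rho> = \<phi>"
      using g.c1.exist[OF char fV pV f1 p1] by blast
    show ?thesis
    proof (rule ex1I[of _ \<rho>])
      show "lin_fun smult \<rho> \<and> \<phi> = conv cop (conv cop \<rho> \<psi>) \<rho> \<and> (\<forall>h\<in>H 0. \<rho> h = eps h)"
        using g.G1_iff rV r1 eq by auto
      fix \<rho>' assume a: "lin_fun smult \<rho>' \<and> \<phi> = conv cop (conv cop \<rho>' \<psi>) \<rho>' \<and> (\<forall>h\<in>H 0. \<rho>' h = eps h)"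
      then have r'V: "\<rho>' \<in> g.V1" and r'1: "\<rho>' - eps \<in> g.I1 1" using g.G1_iff by blast+
      have "conv cop (conv cop \<rho>' \<psi>) \<rho>' = conv cop (conv cop \<rho> \<psi>) \<rho>" using a eq by simp
      then show "\<rho>' = \<rho>" by (rule g.c1.uniq[OF char r'V rV pV r'1 r1 p1])
    qed
  qed
  have B: "\<forall>\<rho>. lin_fun smult \<rho> \<and> \<phi> = conv cop (conv cop \<rho> \<psi>) \<rho> \<and> (\<forall>h\<in>H 0. \<rho> h = eps h) \<longrightarrow>
          (character smult \<phi> \<and> character smult \<psi> \<longrightarrow> character smult \<rho>)
        \<and> (bar smult H \<phi> = conv_inv smult cop eps \<psi> \<longrightarrow> even_fun smult H \<rho>)
        \<and> (bar smult H \<phi> = \<psi> \<longrightarrow> odd_fun smult H cop eps \<rho>)"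
  proof (intro allI impI)
    fix \<rho> assume a: "lin_fun smult \<rho> \<and> \<phi> = conv cop (conv cop \<rho> \<psi>) \<rho> \<and> (\<forall>h\<in>H 0. \<rho> h = eps h)"
    then have rV: "\<rho> \<in> g.V1" and r1: "\<rho> - eps \<in> g.I1 1" using g.G1_iff by blast+
    have rl: "lin_fun smult \<rho>" and r0: "\<forall>h\<in>H 0. \<rho> h = eps h" using a by blast+
    have eq: "conv cop (conv cop \<rho> \<psi>) \<rho> = \<phi>" using a by simp
    show "(character smult \<phi> \<and> character smult \<psi> \<longrightarrow> character smult \<rho>)
        \<and> (bar smult H \<phi> = conv_inv smult cop eps \<psi> \<longrightarrow> even_fun smult H \<rho>)
        \<and> (bar smult H \<phi> = \<psi> \<longrightarrow> odd_fun smult H cop eps \<rho>)"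
    proof (intro conjI impI)
      assume c: "character smult \<phi> \<and> character smult \<psi>"
      show "character smult \<rho>"
        using g.char_rho[OF char _ _ rl r0 eq] c by blast
    next
      assume bf: "bar smult H \<phi> = conv_inv smult cop eps \<psi>"
      obtain q where q: "q \<in> g.V1" "q - eps \<in> g.I1 1" "conv cop q \<psi> = eps" "conv cop \<psi> q = eps"
        "conv_inv smult cop eps \<psi> = q"
        using g.conv_inv_is[OF pV p1] by blast
      have bfq: "bar smult H \<phi> = q" using bf q(5) by simp
      have "bar smult H \<rho> = \<rho>"
        by (rule g.c1.even_abs[OF char g.bar_V1 g.bar_bar1 g.bar_conv1 g.bar_eps g.bar_G1
              rV pV fV r1 p1 eq q(1) q(3) q(4) bfq])
      then show "even_fun smult H \<rho>" unfolding even_fun_def .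
    next
      assume bf: "bar smult H \<phi> = \<psi>"
      obtain t where t: "t \<in> g.V1" "t - eps \<in> g.I1 1" "conv cop t \<rho> = eps" "conv cop \<rho> t = eps"
        "conv_inv smult cop eps \<rho> = t"
        using g.conv_inv_is[OF rV r1] by blast
      have "bar smult H \<rho> = t"
        by (rule g.c1.odd_abs[OF char g.bar_V1 g.bar_bar1 g.bar_conv1 g.bar_G1
              rV pV fV r1 p1 f1 eq bf t(1) t(2) t(3) t(4)])
      then show "odd_fun smult H cop eps \<rho>" unfolding odd_fun_def using t(5) by simp
    qed
  qed
  show ?thesis using A B by blast
qed

end
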